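(* Let $H$ be a Hilbert $C^*$-module and $Q\in\mathcal{L}(H)$ an idempotent. Let $C=\big(I-m(Q)-s(Q)\big)^2$. Then $C$ is invertible and $$Q=\tfrac12C^{-1}\Big[\big(C^{1/2}+s(Q)\big)\big(2m(Q)-I\big)+I-m(Q)\Big].$$
   Context: $H$ is a Hilbert module over a $C^*$-algebra, $\mathcal{L}(H)$ the adjointable operators. For $T$, $|T|=(T^*T)^{1/2}$ and $T^\dagger$ is the Moore–Penrose inverse. For an idempotent $Q$, the matched projection is $m(Q)=\tfrac12(|Q^*|+Q^* )|Q^*|^\dagger(|Q^*|+I)^{-1}(|Q^*|+Q)$, and the supplementary projection is $s(Q)=m(2P_{\mathcal{R}(Q)}-Q)$, where $P_{\mathcal{R}(Q)}$ is the projection onto $\mathcal{R}(Q)$. *)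

theory Defs
  imports "HOL-Analysis.Analysis"
begin

text \<open>The algebra of adjointable operators L(H) on a
Hilbert C*-module H is such an algebra (with the operator norm and adjoint), and
every unital C*-algebra A arises as L(A) for A viewed as a Hilbert module over itself.\<close>

class cstar_algebra = real_normed_algebra_1 + banach +
  fixes adj :: "'a \<Rightarrow> 'a"
    and scaleC :: "complex \<Rightarrow> 'a \<Rightarrow> 'a"
  assumes scaleC_of_real: "scaleC (complex_of_real r) x = scaleR r x"
    and scaleC_add_left: "scaleC (c + d) x = scaleC c x + scaleC d x"
    and scaleC_add_right: "scaleC c (x + y) = scaleC c x + scaleC c y"
    and scaleC_scaleC: "scaleC c (scaleC d x) = scaleC (c * d) x"
    and norm_scaleC: "norm (scaleC c x) = cmod c * norm x"
    and scaleC_mult_left: "scaleC c x * y = scaleC c (x * y)"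
    and scaleC_mult_right: "x * scaleC c y = scaleC c (x * y)"
    and adj_adj: "adj (adj x) = x"
    and adj_add: "adj (x + y) = adj x + adj y"
    and adj_mult: "adj (x * y) = adj y * adj x"
    and adj_scaleC: "adj (scaleC c x) = scaleC (cnj c) (adj x)"
    and cstar_identity: "norm (adj x * x) = norm x ^ 2"

definition positive :: "'a::cstar_algebra \<Rightarrow> bool" where
  "positive a \<longleftrightarrow> (\<exists>b. a = adj b * b)"

definition psqrt :: "'a::cstar_algebra \<Rightarrow> 'a" where
  "psqrt a = (THE r. positive r \<and> r * r = a)"

definition absv :: "'a::cstar_algebra \<Rightarrow> 'a" where
  "absv T = psqrt (adj T * T)"

definition invertible_el :: "'a::cstar_algebra \<Rightarrow> bool" where
  "invertible_el x \<longleftrightarrow> (\<exists>y. x * y = 1 \<and> y * x = 1)"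

definition inv_el :: "'a::cstar_algebra \<Rightarrow> 'a" where
  "inv_el x = (THE y. x * y = 1 \<and> y * x = 1)"

definition mp_inv :: "'a::cstar_algebra \<Rightarrow> 'a" where
  "mp_inv T = (THE X. T * X * T = T \<and> X * T * X = X \<and>
                      adj (T * X) = T * X \<and> adj (X * T) = X * T)"

definition idempotent :: "'a::cstar_algebra \<Rightarrow> bool" where
  "idempotent Q \<longleftrightarrow> Q * Q = Q"

text \<open>Projection P_R(Q) onto the range of Q: the self-adjoint idempotent P with
R(P) = R(Q), i.e. P Q = Q (R(Q) \<subseteq> R(P)) and Q P = P (R(P) \<subseteq> R(Q)).\<close>
definition range_proj :: "'a::cstar_algebra \<Rightarrow> 'a" where
  "range_proj Q = (THE P. adj P = P \<and> P * P = P \<and> P * Q = Q \<and> Q * P = P)"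

definition matched_proj :: "'a::cstar_algebra \<Rightarrow> 'a" where
  "matched_proj Q =
     scaleR (1/2) ((absv (adj Q) + adj Q) * mp_inv (absv (adj Q))
        * inv_el (absv (adj Q) + 1) * (absv (adj Q) + Q))"

definition supp_proj :: "'a::cstar_algebra \<Rightarrow> 'a" where
  "supp_proj Q = matched_proj (2 * range_proj Q - Q)"

end

theory Submission
  imports Defs "HOL-Computational_Algebra.Formal_Power_Series"
begin


lemma adj_zero[simp]: "adj (0::'a::cstar_algebra) = 0"
  by (metis add_cancel_right_right adj_add)

lemma adj_minus[simp]: "adj (- x) = - adj (x::'a::cstar_algebra)"
  by (metis add.right_inverse add_eq_0_iff adj_add adj_zero)

lemma adj_diff[simp]: "adj (x - y) = adj x - adj (y::'a::cstar_algebra)"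
  by (metis adj_add adj_minus diff_conv_add_uminus)

lemma adj_one[simp]: "adj (1::'a::cstar_algebra) = 1"
  by (metis adj_adj adj_mult mult.right_neutral)

lemmas adj_add_simp[simp] = adj_add
lemmas adj_mult_simp[simp] = adj_mult
lemmas adj_adj_simp[simp] = adj_adj

lemma adj_scaleR[simp]: "adj (scaleR r x) = scaleR r (adj (x::'a::cstar_algebra))"
  by (metis adj_scaleC complex_cnj_complex_of_real scaleC_of_real)

lemma adj_of_real[simp]: "adj (of_real r :: 'a::cstar_algebra) = of_real r"
  by (simp add: of_real_def)

lemma adj_power[simp]: "adj (x ^ n) = (adj x) ^ n" for x :: "'a::cstar_algebra"
proof (induction n)
  case (Suc n)
  have "adj (x ^ Suc n) = adj (x^n) * adj x" by (simp add: power_Suc2)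
  also have "\<dots> = adj x ^ Suc n" using Suc by (simp add: power_commutes)
  finally show ?case .
qed simp

lemma adj_numeral[simp]: "adj (numeral k :: 'a::cstar_algebra) = numeral k"
  by (metis adj_of_real of_real_numeral)

lemma adj_inj: "adj x = adj y \<Longrightarrow> x = (y::'a::cstar_algebra)"
  by (metis adj_adj)

lemma adj_eq_0_iff[simp]: "adj x = 0 \<longleftrightarrow> x = (0::'a::cstar_algebra)"
  by (metis adj_adj adj_zero)

lemma norm_adj_le: "norm (adj x) \<ge> norm (x::'a::cstar_algebra)"
proof (cases "x = 0")
  case False
  have "norm x ^ 2 = norm (adj x * x)" by (simp add: cstar_identity)
  also have "\<dots> \<le> norm (adj x) * norm x" by (rule norm_mult_ineq)
  finally have "norm x * norm x \<le> norm (adj x) * norm x" by (simp add: power2_eq_square)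
  then show ?thesis using False by simp
qed simp

lemma norm_adj[simp]: "norm (adj x) = norm (x::'a::cstar_algebra)"
  by (metis adj_adj antisym norm_adj_le)

lemma cstar_identity': "norm (x * adj x) = norm (x::'a::cstar_algebra) ^ 2"
  by (metis adj_adj cstar_identity norm_adj)

lemma scaleC_zero_right[simp]: "scaleC c (0::'a::cstar_algebra) = 0"
  by (metis add_cancel_right_right scaleC_add_right)

lemma scaleC_zero_left[simp]: "scaleC 0 (x::'a::cstar_algebra) = 0"
  by (metis add_cancel_right_right add_0 scaleC_add_left)

lemma scaleC_one[simp]: "scaleC 1 (x::'a::cstar_algebra) = x"
  by (metis of_real_1 scaleC_of_real scaleR_one)

lemma scaleC_minus_left: "scaleC (- c) (x::'a::cstar_algebra) = - scaleC c x"
  by (metis add.right_inverse add_eq_0_iff scaleC_add_left scaleC_zero_left)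

lemma scaleC_minus_right: "scaleC c (- x::'a::cstar_algebra) = - scaleC c x"
  by (metis add.right_inverse add_eq_0_iff scaleC_add_right scaleC_zero_right)

lemma scaleC_diff_left: "scaleC (c - d) (x::'a::cstar_algebra) = scaleC c x - scaleC d x"
  by (metis diff_conv_add_uminus scaleC_add_left scaleC_minus_left)

lemma scaleC_diff_right: "scaleC c (x - y::'a::cstar_algebra) = scaleC c x - scaleC c y"
  by (metis diff_conv_add_uminus scaleC_add_right scaleC_minus_right)

lemma scaleC_sum_left: "scaleC (\<Sum>i\<in>A. f i) (x::'a::cstar_algebra) = (\<Sum>i\<in>A. scaleC (f i) x)"
  by (induction A rule: infinite_finite_induct) (auto simp: scaleC_add_left)

lemma scaleC_sum_right: "scaleC c (\<Sum>i\<in>A. f i) = (\<Sum>i\<in>A. scaleC c (f i::'a::cstar_algebra))"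
  by (induction A rule: infinite_finite_induct) (auto simp: scaleC_add_right)

lemma scaleC_power: "(scaleC c x) ^ n = scaleC (c ^ n) (x ^ n::'a::cstar_algebra)"
proof (induction n)
  case (Suc n)
  then show ?case by (simp add: scaleC_mult_left scaleC_mult_right scaleC_scaleC mult.commute)
qed simp

lemma scaleC_real: "scaleC (complex_of_real r) (x::'a::cstar_algebra) = scaleR r x"
  by (rule scaleC_of_real)

lemma norm_scaleC_diff: "norm (scaleC c x - scaleC d x) = cmod (c - d) * norm (x::'a::cstar_algebra)"
  by (metis norm_scaleC scaleC_diff_left)

lemma scaleC_eq_0_iff: "scaleC c (x::'a::cstar_algebra) = 0 \<longleftrightarrow> c = 0 \<or> x = 0"
  by (metis mult_eq_0_iff norm_eq_zero norm_scaleC zero_less_norm_iff norm_zero)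

section \<open>Invertibility\<close>

lemma inv_el_eq: "x * y = 1 \<Longrightarrow> y * x = 1 \<Longrightarrow> inv_el x = (y::'a::cstar_algebra)"
  unfolding inv_el_def
proof (rule the_equality)
  fix z assume "x * z = 1 \<and> z * x = 1" "x * y = 1" "y * x = 1"
  then show "z = y" by (metis mult.assoc mult_1_left mult_1_right)
qed auto

lemma invertible_elI: "x * y = 1 \<Longrightarrow> y * x = 1 \<Longrightarrow> invertible_el (x::'a::cstar_algebra)"
  unfolding invertible_el_def by blast

lemma inv_el_props:
  assumes "invertible_el (x::'a::cstar_algebra)"
  shows "x * inv_el x = 1" "inv_el x * x = 1"
  using assms inv_el_eq unfolding invertible_el_def by metis+

lemma inv_el_left: "invertible_el x \<Longrightarrow> inv_el x * x = (1::'a::cstar_algebra)"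
  using inv_el_props by blast
lemma inv_el_right: "invertible_el x \<Longrightarrow> x * inv_el x = (1::'a::cstar_algebra)"
  using inv_el_props by blast

lemma invertible_inv_el: "invertible_el x \<Longrightarrow> invertible_el (inv_el (x::'a::cstar_algebra))"
  by (meson inv_el_props invertible_elI)

lemma inv_el_inv_el: "invertible_el x \<Longrightarrow> inv_el (inv_el x) = (x::'a::cstar_algebra)"
  by (simp add: inv_el_eq inv_el_props)

lemma invertible_one[simp]: "invertible_el (1::'a::cstar_algebra)"
  by (rule invertible_elI[of _ 1]) simp_all

lemma inv_el_one[simp]: "inv_el (1::'a::cstar_algebra) = 1"
  by (rule inv_el_eq) simp_all

lemma invertible_mult:
  assumes "invertible_el (a::'a::cstar_algebra)" "invertible_el b"
  shows "invertible_el (a * b)" "inv_el (a * b) = inv_el b * inv_el a"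
proof -
  have 1: "(a * b) * (inv_el b * inv_el a) = 1"
    by (metis assms inv_el_props mult.assoc mult_1_left)
  have 2: "(inv_el b * inv_el a) * (a * b) = 1"
    by (metis assms inv_el_props mult.assoc mult_1_left)
  show "invertible_el (a * b)" using 1 2 by (rule invertible_elI)
  show "inv_el (a * b) = inv_el b * inv_el a" using 1 2 by (rule inv_el_eq)
qed

lemma invertible_left_right:
  assumes "x * y = 1" "z * x = (1::'a::cstar_algebra)"
  shows "invertible_el x" "inv_el x = y" "y = z"
proof -
  have "y = z" by (metis assms mult.assoc mult_1_left mult_1_right)
  then show "invertible_el x" "inv_el x = y" "y = z" using assms invertible_elI inv_el_eq by auto
qed

lemma invertible_commuting_factors:
  assumes "invertible_el (a * b)" "a * b = b * (a::'a::cstar_algebra)"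
  shows "invertible_el a" "invertible_el b"
proof -
  let ?c = "inv_el (a * b)"
  have c1: "a * b * ?c = 1" "?c * (a * b) = 1" using assms inv_el_props by auto
  have "a * (b * ?c) = 1" using c1 by (simp add: mult.assoc)
  moreover have "(?c * b) * a = 1" using c1 assms(2) by (simp add: mult.assoc)
  ultimately show "invertible_el a" by (rule invertible_left_right)
  have "b * (a * ?c) = 1" using c1 assms(2) by (metis mult.assoc)
  moreover have "(?c * a) * b = 1" using c1 by (simp add: mult.assoc)
  ultimately show "invertible_el b" by (rule invertible_left_right)
qed

lemma commute_inv_el:
  assumes "invertible_el x" "a * x = x * (a::'a::cstar_algebra)"
  shows "a * inv_el x = inv_el x * a"
proof -
  have "a * inv_el x = inv_el x * x * a * inv_el x" by (simp add: inv_el_left[OF assms(1)])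
  also have "\<dots> = inv_el x * a * x * inv_el x" using assms by (simp add: mult.assoc)
  also have "\<dots> = inv_el x * a" by (simp add: mult.assoc inv_el_right[OF assms(1)])
  finally show ?thesis .
qed

lemma invertible_minus: "invertible_el x \<Longrightarrow> invertible_el (- x::'a::cstar_algebra)"
  by (metis inv_el_props invertible_elI minus_mult_minus)

lemma invertible_minus_iff: "invertible_el (- x) \<longleftrightarrow> invertible_el (x::'a::cstar_algebra)"
  by (metis invertible_minus minus_minus)

lemma invertible_scaleC:
  assumes "invertible_el (x::'a::cstar_algebra)" "c \<noteq> 0"
  shows "invertible_el (scaleC c x)"
  apply (rule invertible_elI[of _ "scaleC (1/c) (inv_el x)"])
  using assms by (simp_all add: scaleC_mult_left scaleC_mult_right scaleC_scaleC inv_el_props)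

lemma invertible_scaleC_iff:
  "c \<noteq> 0 \<Longrightarrow> invertible_el (scaleC c x) \<longleftrightarrow> invertible_el (x::'a::cstar_algebra)"
  by (metis invertible_scaleC nonzero_divide_eq_eq scaleC_one scaleC_scaleC divide_eq_0_iff one_neq_zero mult.commute)

lemma invertible_scaleR_iff:
  "r \<noteq> 0 \<Longrightarrow> invertible_el (scaleR r x) \<longleftrightarrow> invertible_el (x::'a::cstar_algebra)"
  by (metis invertible_scaleC_iff of_real_eq_0_iff scaleC_of_real)



lemma scaleC_real_one: "scaleC (complex_of_real t) (1::'a::cstar_algebra) = of_real t"
  by (subst scaleC_of_real) (simp add: of_real_def)

lemma neumann:
  fixes x :: "'a::cstar_algebra"
  assumes x: "norm x < 1"
  shows "invertible_el (1 - x)" "inv_el (1 - x) = (\<Sum>n. x^n)"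
    "norm (inv_el (1 - x) - 1) \<le> norm x / (1 - norm x)"
    "norm (inv_el (1 - x)) \<le> 1 / (1 - norm x)"
proof -
  have sg: "summable (\<lambda>n. norm x ^ n)" using x by (simp add: summable_geometric)
  have sn: "summable (\<lambda>n. norm (x^n))"
    by (rule summable_comparison_test[OF _ sg]) (auto simp: norm_power_ineq)
  have s: "summable (\<lambda>n. x^n)" using sn by (rule summable_norm_cancel)
  define S where "S = (\<Sum>n. x^n)"
  have h: "(\<Sum>n. x ^ Suc n) = S - 1" unfolding S_def using suminf_split_head[OF s] by simp
  have "x * S = (\<Sum>n. x ^ Suc n)" unfolding S_def using suminf_mult[OF s, of x] by simp
  then have l: "(1 - x) * S = 1" using h by (simp add: algebra_simps)
  have "S * x = (\<Sum>n. x ^ n * x)" unfolding S_def using suminf_mult2[OF s, of x] .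
  also have "\<dots> = (\<Sum>n. x ^ Suc n)" by (simp only: power_Suc2)
  finally have "S * x = (\<Sum>n. x ^ Suc n)" .
  then have r: "S * (1 - x) = 1" using h by (simp add: algebra_simps)
  show "invertible_el (1 - x)" using l r by (rule invertible_elI)
  show "inv_el (1 - x) = (\<Sum>n. x^n)" using l r unfolding S_def by (rule inv_el_eq)
  have sn1: "summable (\<lambda>n. norm (x ^ Suc n))" using sn by (rule summable_Suc_iff[THEN iffD2])
  have sg1: "summable (\<lambda>n. norm x ^ Suc n)" using sg by (rule summable_Suc_iff[THEN iffD2])
  have "norm (S - 1) = norm (\<Sum>n. x ^ Suc n)" using h by simp
  also have "\<dots> \<le> (\<Sum>n. norm (x ^ Suc n))" by (rule summable_norm[OF sn1])
  also have "\<dots> \<le> (\<Sum>n. norm x ^ Suc n)"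
    by (rule suminf_le[OF _ sn1 sg1]) (rule norm_power_ineq)
  also have "\<dots> = norm x / (1 - norm x)"
    using suminf_mult[OF sg, of "norm x"] x by (simp add: suminf_geometric)
  finally have b: "norm (S - 1) \<le> norm x / (1 - norm x)" .
  then show "norm (inv_el (1 - x) - 1) \<le> norm x / (1 - norm x)"
    using l r inv_el_eq by metis
  have "norm S \<le> 1 + norm (S - 1)" by (metis add.commute diff_add_cancel norm_one norm_triangle_ineq)
  also have "\<dots> \<le> 1 + norm x / (1 - norm x)" using b by simp
  also have "\<dots> = 1 / (1 - norm x)" using x by (simp add: field_simps)
  finally show "norm (inv_el (1 - x)) \<le> 1 / (1 - norm x)" using l r inv_el_eq by metis
qed

lemma inv_perturb:
  fixes a b :: "'a::cstar_algebra"
  assumes a: "invertible_el a" and k: "norm (inv_el a) * norm (b - a) < 1"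
  shows "invertible_el b"
    "norm (inv_el b - inv_el a) \<le> norm (inv_el a)^2 * norm (b - a) / (1 - norm (inv_el a) * norm (b - a))"
proof -
  define u where "u = inv_el a * (a - b)"
  define k where "k = norm (inv_el a) * norm (b - a)"
  have nu: "norm u \<le> k" unfolding u_def k_def
    by (metis norm_minus_commute norm_mult_ineq)
  have u1: "norm u < 1" using nu k k_def by simp
  have bb: "b = a * (1 - u)" unfolding u_def
    by (simp add: algebra_simps mult.assoc[symmetric] inv_el_right[OF a])
  note N = neumann[OF u1]
  show ib: "invertible_el b" using bb invertible_mult(1)[OF a N(1)] by simp
  have ie: "inv_el b = inv_el (1 - u) * inv_el a" using bb invertible_mult(2)[OF a N(1)] by simp
  have "inv_el b - inv_el a = (inv_el (1 - u) - 1) * inv_el a" using ie by (simp add: algebra_simps)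
  then have "norm (inv_el b - inv_el a) \<le> norm (inv_el (1 - u) - 1) * norm (inv_el a)"
    by (simp add: norm_mult_ineq)
  also have "\<dots> \<le> norm u / (1 - norm u) * norm (inv_el a)"
    by (rule mult_right_mono[OF N(3)]) simp
  also have "\<dots> \<le> k / (1 - k) * norm (inv_el a)"
  proof (rule mult_right_mono)
    show "norm u / (1 - norm u) \<le> k / (1 - k)"
      using nu k k_def u1 by (intro frac_le) (auto simp: k_def)
  qed simp
  also have "\<dots> = norm (inv_el a)^2 * norm (b - a) / (1 - norm (inv_el a) * norm (b - a))"
    unfolding k_def by (simp add: power2_eq_square)
  finally show "norm (inv_el b - inv_el a) \<le> norm (inv_el a)^2 * norm (b - a) / (1 - norm (inv_el a) * norm (b - a))" .
qed

lemma inv_el_nonzero: "invertible_el a \<Longrightarrow> inv_el a \<noteq> (0::'a::cstar_algebra)"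
  by (metis inv_el_right mult_zero_right zero_neq_one)

lemma tendsto_inv_el:
  fixes g :: "'b \<Rightarrow> 'a::cstar_algebra"
  assumes g: "(g \<longlongrightarrow> a) F" and a: "invertible_el a"
  shows "((\<lambda>z. inv_el (g z)) \<longlongrightarrow> inv_el a) F"
proof -
  define M where "M = norm (inv_el a)"
  have M: "M > 0" unfolding M_def using inv_el_nonzero[OF a] by simp
  have M2: "1 / (2 * M) > 0" using M by simp
  have ev: "eventually (\<lambda>z. norm (g z - a) < 1 / (2 * M)) F"
    using g[unfolded tendsto_iff, rule_format, OF M2] by (simp only: dist_norm)
  have ev2: "eventually (\<lambda>z. norm (inv_el (g z) - inv_el a) \<le> 2 * M^2 * norm (g z - a)) F"
    using ev
  proof eventually_elim
    case (elim z)
    have k: "M * norm (g z - a) < 1/2" using elim M by (simp add: field_simps)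
    then have k1: "norm (inv_el a) * norm (g z - a) < 1" unfolding M_def by simp
    have "norm (inv_el (g z) - inv_el a) \<le> M^2 * norm (g z - a) / (1 - M * norm (g z - a))"
      using inv_perturb(2)[OF a k1] unfolding M_def .
    also have "\<dots> \<le> M^2 * norm (g z - a) / (1/2)"
    proof (rule divide_left_mono)
      show "1/2 \<le> 1 - M * norm (g z - a)" using k by linarith
      show "0 \<le> M^2 * norm (g z - a)" by simp
      show "0 < (1 - M * norm (g z - a)) * (1/2)" using k by simp
    qed
    finally show ?case by simp
  qed
  have "((\<lambda>z. norm (g z - a)) \<longlongrightarrow> 0) F" using tendsto_norm_zero[OF LIM_zero[OF g]] .
  then have "((\<lambda>z. 2 * M^2 * norm (g z - a)) \<longlongrightarrow> 0) F" by (rule tendsto_mult_right_zero)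
  then have "((\<lambda>z. inv_el (g z) - inv_el a) \<longlongrightarrow> 0) F"
    by (rule Lim_null_comparison[OF ev2])
  then show ?thesis by (rule LIM_zero_cancel)
qed

lemma spec_bound:
  fixes y :: "'a::cstar_algebra"
  assumes "norm y < cmod \<mu>"
  shows "invertible_el (scaleC \<mu> 1 - y)"
proof -
  have mu: "\<mu> \<noteq> 0" using assms by auto
  have n: "norm (scaleC (1/\<mu>) y) < 1" using assms mu
    by (simp add: norm_scaleC norm_divide field_simps)
  have e: "scaleC \<mu> 1 - y = scaleC \<mu> (1 - scaleC (1/\<mu>) y)"
    using mu by (simp add: scaleC_diff_right scaleC_scaleC)
  show ?thesis unfolding e using invertible_scaleC[OF neumann(1)[OF n] mu] .
qed

lemma spec_bound_real:
  fixes y :: "'a::cstar_algebra"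
  assumes "norm y < \<bar>t\<bar>"
  shows "invertible_el (of_real t - y)"
proof -
  have "of_real t = scaleC (complex_of_real t) (1::'a)" by (simp only: scaleC_real_one)
  then show ?thesis using spec_bound[of y "complex_of_real t"] assms by simp
qed

lemma spec_real:
  fixes h :: "'a::cstar_algebra"
  assumes h: "adj h = h" and im: "Im l \<noteq> 0"
  shows "invertible_el (scaleC l 1 - h)"
proof (rule ccontr)
  assume ni: "\<not> invertible_el (scaleC l 1 - h)"
  have key: "Re l ^ 2 + (Im l + t)^2 \<le> norm h ^ 2 + t^2" for t :: real
  proof -
    define a :: 'a where "a = scaleC (\<i> * complex_of_real t) 1"
    define y where "y = h + a"
    define \<mu> where "\<mu> = l + \<i> * complex_of_real t"
    have "scaleC \<mu> 1 - y = scaleC l 1 - h" unfolding \<mu>_def y_def a_def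
      by (simp add: scaleC_add_left)
    then have "\<not> norm y < cmod \<mu>" using ni spec_bound by metis
    then have c: "cmod \<mu> \<le> norm y" by simp
    have aa: "adj a = - a" unfolding a_def by (simp add: adj_scaleC scaleC_minus_left)
    have ah: "a * h = h * a" unfolding a_def by (simp add: scaleC_mult_left scaleC_mult_right)
    have "a * a = scaleC ((\<i> * complex_of_real t) * (\<i> * complex_of_real t)) 1" unfolding a_def
      by (simp add: scaleC_mult_left scaleC_mult_right scaleC_scaleC)
    also have "(\<i> * complex_of_real t) * (\<i> * complex_of_real t) = - complex_of_real (t^2)"
      by (simp add: power2_eq_square algebra_simps)
    also have "scaleC (- complex_of_real (t^2)) (1::'a) = - of_real (t^2)"
      by (simp only: scaleC_minus_left scaleC_real_one)
    finally have a2: "a * a = - of_real (t^2)" .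
    have "adj y * y = (h - a) * (h + a)" by (simp add: y_def aa h)
    also have "\<dots> = h * h + (h * a - a * h) - a * a" by (simp add: algebra_simps)
    also have "\<dots> = h * h + of_real (t^2)" by (simp add: ah a2)
    finally have "adj y * y = h * h + of_real (t^2)" .
    then have "norm y ^ 2 = norm (h * h + of_real (t^2))" by (metis cstar_identity)
    also have "\<dots> \<le> norm (h * h) + norm (of_real (t^2) :: 'a)" by (rule norm_triangle_ineq)
    also have "\<dots> \<le> norm h ^ 2 + t^2"
    proof -
      have "norm (of_real (t^2) :: 'a) = t^2" by (metis abs_power2 norm_of_real)
      then show ?thesis using norm_mult_ineq[of h h] by (simp only: power2_eq_square)
    qed
    finally have "norm y ^ 2 \<le> norm h ^ 2 + t^2" .
    moreover have "cmod \<mu> ^ 2 \<le> norm y ^ 2" using c by (simp add: power_mono)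
    moreover have "cmod \<mu> ^ 2 = Re l ^ 2 + (Im l + t)^2" unfolding \<mu>_def
      by (simp add: cmod_power2)
    ultimately show ?thesis by simp
  qed
  define t where "t = (norm h ^ 2 + 1) / (2 * Im l)"
  have "2 * Im l * t = norm h ^ 2 + 1" unfolding t_def using im by simp
  moreover have "Re l ^ 2 + (Im l + t)^2 = Re l ^ 2 + Im l ^ 2 + 2 * Im l * t + t^2"
    by (simp add: power2_eq_square algebra_simps)
  ultimately show False using key[of t]
    by (smt (verit) zero_le_power2)
qed



definition rt :: "nat \<Rightarrow> complex" where
  "rt m = exp (2 * of_real pi * \<i> / of_nat m)"

lemma rt_pow_eq: "rt m ^ l = exp (of_nat l * (2 * of_real pi * \<i> / of_nat m))"
  unfolding rt_def by (simp only: exp_of_nat_mult)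

lemma rt_pow_m: "m > 0 \<Longrightarrow> rt m ^ m = 1"
  unfolding rt_pow_eq by simp

lemma norm_rt_pow[simp]: "cmod (rt m ^ l) = 1"
proof -
  have "rt m ^ l = exp (\<i> * complex_of_real (2 * pi * l / m))"
    unfolding rt_pow_eq by (simp add: field_simps)
  then show ?thesis by simp
qed

lemma rt_pow_ne1:
  assumes "0 < i" "i < m"
  shows "rt m ^ i \<noteq> 1"
proof
  assume "rt m ^ i = 1"
  then have "exp (complex_of_real (2 * pi * i / m) * \<i>) = 1"
    unfolding rt_pow_eq by (simp add: field_simps)
  then obtain n :: int where n: "2 * pi * i / m = of_int (2 * n) * pi"
    unfolding exp_eq_1 by auto
  have "real i = real_of_int n * real m" using n assms pi_gt_zero
    by (simp add: field_simps)
  then have "int i = n * int m" by (metis of_int_eq_iff of_int_mult of_int_of_nat_eq)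
  note eq = this
  show False
  proof (cases "n \<le> 0")
    case True
    then have "n * int m \<le> 0" by (simp add: mult_nonpos_nonneg)
    then show False using eq assms by linarith
  next
    case False
    then have "n \<ge> 1" by simp
    then have "n * int m \<ge> int m" using mult_right_mono[of 1 n "int m"] by simp
    then show False using eq assms by linarith
  qed
qed

lemma sum_rt:
  assumes "i < m"
  shows "(\<Sum>l<m. (rt m ^ i) ^ l) = (if i = 0 then of_nat m else 0)"
proof (cases "i = 0")
  case False
  have m: "m > 0" using assms by simp
  have "(rt m ^ i) ^ m = 1" by (metis power_mult[symmetric] mult.commute power_mult rt_pow_m[OF m] power_one)
  then show ?thesis using False geometric_sum[OF rt_pow_ne1[of i m]] assms by simp
qed simp

lemma geom_telescope:
  fixes w :: "'a::ring_1"
  shows "(\<Sum>i<n. w^i) * (1 - w) = 1 - w^n" "(1 - w) * (\<Sum>i<n. w^i) = 1 - w^n"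
proof -
  show "(\<Sum>i<n. w^i) * (1 - w) = 1 - w^n"
  proof (induction n)
    case (Suc n)
    have "(\<Sum>i<Suc n. w^i) * (1 - w) = (\<Sum>i<n. w^i) * (1 - w) + (w^n - w^n * w)"
      by (simp add: distrib_right right_diff_distrib)
    also have "\<dots> = 1 - w^Suc n" using Suc by (simp del: power_Suc add: power_Suc2)
    finally show ?case .
  qed simp
  show "(1 - w) * (\<Sum>i<n. w^i) = 1 - w^n"
  proof (induction n)
    case (Suc n)
    have "(1 - w) * (\<Sum>i<Suc n. w^i) = (1 - w) * (\<Sum>i<n. w^i) + (w^n - w * w^n)"
      by (simp add: distrib_left left_diff_distrib)
    also have "\<dots> = 1 - w^Suc n" using Suc by simp
    finally show ?case .
  qed simp
qed

lemma roots_avg: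
  fixes y :: "'a::cstar_algebra"
  assumes m: "m > 0" and inv: "\<And>l. l < m \<Longrightarrow> invertible_el (1 - scaleC (rt m ^ l) y)"
  shows "invertible_el (1 - y^m)"
    "inv_el (1 - y^m) = scaleC (1 / of_nat m) (\<Sum>l<m. inv_el (1 - scaleC (rt m ^ l) y))"
proof -
  define w where "w l = scaleC (rt m ^ l) y" for l
  define g where "g l = inv_el (1 - w l)" for l
  have wm: "w l ^ m = y ^ m" for l
  proof -
    have "(rt m ^ l) ^ m = 1" by (metis mult.commute power_mult power_one rt_pow_m[OF m])
    then show ?thesis unfolding w_def by (simp add: scaleC_power)
  qed
  have wi: "w l ^ i = scaleC ((rt m ^ i) ^ l) (y ^ i)" for l i
    unfolding w_def by (simp add: scaleC_power power_mult[symmetric] mult.commute)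
  have L: "(1 - y^m) * g l = (\<Sum>i<m. w l ^ i)" if "l < m" for l
  proof -
    have "(1 - y^m) * g l = (\<Sum>i<m. w l ^ i) * ((1 - w l) * g l)"
      using geom_telescope(1)[where n=m and w="w l"] wm by (simp add: mult.assoc[symmetric])
    also have "(1 - w l) * g l = 1" unfolding g_def using inv[OF that] inv_el_right w_def by metis
    finally show ?thesis by simp
  qed
  have R: "g l * (1 - y^m) = (\<Sum>i<m. w l ^ i)" if "l < m" for l
  proof -
    have "g l * (1 - y^m) = (g l * (1 - w l)) * (\<Sum>i<m. w l ^ i)"
      using geom_telescope(2)[where n=m and w="w l"] wm by (simp add: mult.assoc)
    also have "g l * (1 - w l) = 1" unfolding g_def using inv[OF that] inv_el_left w_def by metis
    finally show ?thesis by simp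
  qed
  have S: "(\<Sum>l<m. \<Sum>i<m. w l ^ i) = scaleC (of_nat m :: complex) 1"
  proof -
    have "(\<Sum>l<m. \<Sum>i<m. w l ^ i) = (\<Sum>i<m. \<Sum>l<m. scaleC ((rt m ^ i) ^ l) (y ^ i))"
      unfolding wi by (rule sum.swap)
    also have "\<dots> = (\<Sum>i<m. scaleC (\<Sum>l<m. (rt m ^ i) ^ l) (y ^ i))"
      by (simp add: scaleC_sum_left)
    also have "\<dots> = (\<Sum>i<m. if i = 0 then scaleC (of_nat m :: complex) (1::'a) else 0)"
      by (intro sum.cong refl) (simp add: sum_rt)
    also have "\<dots> = scaleC (of_nat m :: complex) 1" using m by (simp add: sum.delta)
    finally show ?thesis .
  qed
  have l1: "(1 - y^m) * (\<Sum>l<m. g l) = scaleC (of_nat m :: complex) 1"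
    using L S by (simp add: sum_distrib_left)
  have r1: "(\<Sum>l<m. g l) * (1 - y^m) = scaleC (of_nat m :: complex) 1"
    using R S by (simp add: sum_distrib_right)
  have mm: "scaleC (1 / of_nat m) (scaleC (of_nat m :: complex) (1::'a)) = 1" using m
    by (simp add: scaleC_scaleC)
  have l2: "(1 - y^m) * scaleC (1 / of_nat m) (\<Sum>l<m. g l) = 1"
    using l1 mm by (simp add: scaleC_mult_right)
  have r2: "scaleC (1 / of_nat m) (\<Sum>l<m. g l) * (1 - y^m) = 1"
    using r1 mm by (simp add: scaleC_mult_left)
  show "invertible_el (1 - y^m)" using l2 r2 by (rule invertible_elI)
  show "inv_el (1 - y^m) = scaleC (1 / of_nat m) (\<Sum>l<m. inv_el (1 - scaleC (rt m ^ l) y))"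
    using inv_el_eq[OF l2 r2] unfolding g_def w_def .
qed



lemma avg_bound:
  fixes a :: "nat \<Rightarrow> 'a::cstar_algebra"
  assumes K: "K > 0" and b: "\<And>j. j < K \<Longrightarrow> norm (a j) \<le> e"
  shows "norm (scaleC (1 / of_nat K) (\<Sum>j<K. a j)) \<le> e"
proof -
  have "norm (scaleC (1 / of_nat K) (\<Sum>j<K. a j)) = (1 / real K) * norm (\<Sum>j<K. a j)"
    by (simp add: norm_scaleC norm_divide)
  also have "\<dots> \<le> (1 / real K) * (\<Sum>j<K. norm (a j))"
    by (intro mult_left_mono norm_sum) simp
  also have "\<dots> \<le> (1 / real K) * (\<Sum>j<K. e)"
    by (intro mult_left_mono sum_mono b) simp_all
  also have "\<dots> = e" using K by simp
  finally show ?thesis .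
qed

lemma avg_diff:
  fixes a b :: "nat \<Rightarrow> 'a::cstar_algebra"
  shows "scaleC c (\<Sum>j<K. a j) - scaleC c (\<Sum>j<K. b j) = scaleC c (\<Sum>j<K. a j - b j)"
  by (simp add: scaleC_diff_right[symmetric] sum_subtractf)

lemma avg_const:
  fixes y :: "'a::cstar_algebra"
  assumes "K > 0"
  shows "scaleC (1 / of_nat K) (\<Sum>j<K. y) = y"
proof -
  have "(\<Sum>j<K. y) = scaleC (of_nat K) y"
  proof (induction K)
    case (Suc K)
    have "(\<Sum>j<Suc K. y) = (\<Sum>j<K. y) + y" by (simp only: sum.lessThan_Suc)
    also have "\<dots> = scaleC (of_nat K + 1) y" unfolding Suc by (simp add: scaleC_add_left)
    finally show ?case by (metis of_nat_Suc add.commute)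
  qed simp
  then show ?thesis using assms by (simp add: scaleC_scaleC)
qed

lemma tendsto_scaleC_left:
  fixes x :: "'a::cstar_algebra"
  assumes "(c \<longlongrightarrow> c0) F"
  shows "((\<lambda>t. scaleC (c t) x) \<longlongrightarrow> scaleC c0 x) F"
proof -
  have "((\<lambda>t. cmod (c t - c0)) \<longlongrightarrow> 0) F" using tendsto_norm_zero[OF LIM_zero[OF assms]] .
  then have "((\<lambda>t. cmod (c t - c0) * norm x) \<longlongrightarrow> 0) F" by (rule tendsto_mult_left_zero)
  then have "((\<lambda>t. scaleC (c t) x - scaleC c0 x) \<longlongrightarrow> 0) F"
    by (rule Lim_null_comparison[rotated]) (simp add: norm_scaleC_diff)
  then show ?thesis by (rule LIM_zero_cancel)
qed

lemma norm_rt_pow_minus_1: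
  assumes "N > 0"
  shows "cmod (rt N ^ l - 1) \<le> 2 * pi * l / N"
proof -
  have "rt N ^ l = exp (\<i> * complex_of_real (2 * pi * l / N))"
    unfolding rt_pow_eq by (simp add: field_simps)
  then have "cmod (rt N ^ l - 1) = 2 * \<bar>sin (2 * pi * l / N / 2)\<bar>" by (simp only: dist_exp_i_1)
  also have "\<dots> \<le> 2 * \<bar>2 * pi * l / N / 2\<bar>" by (intro mult_left_mono abs_sin_x_le_abs_x) simp
  also have "\<dots> = 2 * pi * l / N" by simp
  finally show ?thesis .
qed

lemma norm_rt[simp]: "cmod (rt m) = 1"
  using norm_rt_pow[of m 1] by simp

lemma rt_mult_pow:
  assumes "K > 0" "m > 0"
  shows "rt (m * K) ^ K = rt m"
proof -
  have "rt (m * K) ^ K = exp (of_nat K * (2 * of_real pi * \<i> / of_nat (m * K)))" by (rule rt_pow_eq)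
  also have "of_nat K * (2 * of_real pi * \<i> / of_nat (m * K)) = 2 * of_real pi * \<i> / (of_nat m :: complex)"
    using assms by (simp add: field_simps)
  finally show ?thesis unfolding rt_def .
qed

lemma idem_near_one:
  fixes e :: "'a::cstar_algebra"
  assumes "e * e = e" "norm (e - 1) < 1"
  shows "e = 1"
proof (rule ccontr)
  assume "e \<noteq> 1"
  then have p: "norm (1 - e) > 0" by simp
  have "(1 - e) * (1 - e) = 1 - e" using assms(1) by (simp add: algebra_simps)
  then have "norm (1 - e) \<le> norm (1 - e) * norm (1 - e)" by (metis norm_mult_ineq)
  then have "1 \<le> norm (1 - e)" using p by simp
  then show False using assms(2) by (simp add: norm_minus_commute)
qed

definition ff :: "'a::cstar_algebra \<Rightarrow> complex \<Rightarrow> 'a" where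
  "ff x l = inv_el (1 - scaleC l x)"

definition EE :: "'a::cstar_algebra \<Rightarrow> nat \<Rightarrow> complex \<Rightarrow> 'a" where
  "EE x K z = inv_el (1 - scaleC (z^K) (x^K))"

context
  fixes x :: "'a::cstar_algebra" and R :: real
  assumes Rpos: "R > 0"
    and invd: "\<And>l. cmod l \<le> R \<Longrightarrow> invertible_el (1 - scaleC l x)"
begin

lemma ff_cont: "continuous_on (cball (0::complex) R) (ff x)"
  unfolding continuous_on_def
proof
  fix z assume z: "z \<in> cball (0::complex) R"
  have "((\<lambda>l. 1 - scaleC l x) \<longlongrightarrow> 1 - scaleC z x) (at z within cball (0::complex) R)"
    by (intro tendsto_diff tendsto_const tendsto_scaleC_left tendsto_ident_at)
  then show "(ff x \<longlongrightarrow> ff x z) (at z within cball (0::complex) R)"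
    unfolding ff_def using z invd by (intro tendsto_inv_el) auto
qed

lemma ff_uc: "uniformly_continuous_on (cball (0::complex) R) (ff x)"
  by (rule compact_uniformly_continuous[OF ff_cont compact_cball])

lemma E_avg:
  assumes z: "cmod z \<le> R" and K: "K > 0"
  shows "invertible_el (1 - scaleC (z^K) (x^K))"
    "EE x K z = scaleC (1 / of_nat K) (\<Sum>j<K. ff x (rt K ^ j * z))"
proof -
  have i: "invertible_el (1 - scaleC (rt K ^ j) (scaleC z x))" for j
    using invd[of "rt K ^ j * z"] z by (simp add: scaleC_scaleC norm_mult)
  have p: "(scaleC z x) ^ K = scaleC (z^K) (x^K)" by (rule scaleC_power)
  show "invertible_el (1 - scaleC (z^K) (x^K))" using roots_avg(1)[OF K i] p by simp
  show "EE x K z = scaleC (1 / of_nat K) (\<Sum>j<K. ff x (rt K ^ j * z))"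
    using roots_avg(2)[OF K i] p unfolding EE_def ff_def by (simp add: scaleC_scaleC)
qed

lemma E_mult:
  assumes z: "cmod z \<le> R" and K: "K > 0" and m: "m > 0"
  shows "EE x (m * K) z = scaleC (1 / of_nat m) (\<Sum>l<m. EE x K (rt (m * K) ^ l * z))"
proof -
  define y where "y = scaleC (z^K) (x^K)"
  have e: "scaleC (rt m ^ l) y = scaleC ((rt (m * K) ^ l * z) ^ K) (x^K)" for l
  proof -
    have "(rt (m * K) ^ l * z) ^ K = (rt (m * K) ^ K) ^ l * z ^ K"
      by (simp add: power_mult_distrib power_mult[symmetric] mult.commute)
    also have "\<dots> = rt m ^ l * z ^ K" using rt_mult_pow[OF K m] by simp
    finally show ?thesis unfolding y_def by (simp add: scaleC_scaleC)
  qed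
  have i: "invertible_el (1 - scaleC (rt m ^ l) y)" for l
    unfolding e using E_avg(1)[OF _ K, of "rt (m * K) ^ l * z"] z by (simp add: norm_mult)
  have p: "y ^ m = scaleC (z^(m*K)) (x^(m*K))" unfolding y_def
    by (simp add: scaleC_power power_mult[symmetric] mult.commute)
  show ?thesis using roots_avg(2)[OF m i] p unfolding EE_def e by simp
qed

lemma E_double:
  assumes z: "cmod z \<le> R" and K: "K > 0"
  shows "EE x (2 * K) z = EE x K (rt (2 * K) * z) * EE x K z"
proof -
  define w where "w = scaleC (z^K) (x^K)"
  have r: "rt (2 * K) ^ K = -1"
    using rt_mult_pow[OF K, of 2] unfolding rt_def by simp
  have e: "scaleC ((rt (2 * K) * z) ^ K) (x^K) = - w" unfolding w_def
    by (simp add: power_mult_distrib r scaleC_minus_left)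
  have i1: "invertible_el (1 - w)" unfolding w_def by (rule E_avg(1)[OF z K])
  have i2: "invertible_el (1 + w)"
    using E_avg(1)[OF _ K, of "rt (2 * K) * z"] z e by (simp add: norm_mult)
  have ww: "w * w = scaleC (z^(2*K)) (x^(2*K))" unfolding w_def
    by (simp add: scaleC_mult_left scaleC_mult_right scaleC_scaleC power_add[symmetric] mult_2)
  have "(1 - w) * (1 + w) = 1 - w * w" by (simp add: algebra_simps)
  then have p: "(1 - w) * (1 + w) = 1 - scaleC (z^(2*K)) (x^(2*K))" using ww by simp
  show ?thesis unfolding EE_def e using invertible_mult(2)[OF i1 i2] p by (simp add: w_def)
qed

lemma E_equicont:
  assumes e: "e > 0"
  obtains d where "d > 0" "\<And>K z z'. K > 0 \<Longrightarrow> cmod z \<le> R \<Longrightarrow> cmod z' \<le> R \<Longrightarrow> cmod (z' - z) < d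
      \<Longrightarrow> norm (EE x K z' - EE x K z) \<le> e"
proof -
  obtain d where d: "d > 0" and dd: "\<And>u u'. u \<in> cball (0::complex) R \<Longrightarrow> u' \<in> cball (0::complex) R \<Longrightarrow> dist u' u < d
      \<Longrightarrow> dist (ff x u') (ff x u) < e"
    using uniformly_continuous_onE[OF ff_uc e] by metis
  show ?thesis
  proof (rule that[OF d])
    fix K z z' assume K: "(K::nat) > 0" and z: "cmod z \<le> R" and z': "cmod z' \<le> R" and zz: "cmod (z' - z) < d"
    have "EE x K z' - EE x K z = scaleC (1 / of_nat K) (\<Sum>j<K. ff x (rt K ^ j * z') - ff x (rt K ^ j * z))"
      unfolding E_avg(2)[OF z K] E_avg(2)[OF z' K] by (rule avg_diff)
    also have "norm \<dots> \<le> e"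
    proof (rule avg_bound[OF K])
      fix j
      have "dist (ff x (rt K ^ j * z')) (ff x (rt K ^ j * z)) < e"
        using z z' zz by (intro dd) (auto simp: norm_mult dist_norm right_diff_distrib[symmetric])
      then show "norm (ff x (rt K ^ j * z') - ff x (rt K ^ j * z)) \<le> e" by (simp add: dist_norm)
    qed
    finally show "norm (EE x K z' - EE x K z) \<le> e" .
  qed
qed


lemma E_cauchy:
  assumes z: "cmod z \<le> R"
  shows "Cauchy (\<lambda>k. EE x (2^k) z)"
proof (rule CauchyI)
  fix e :: real assume e: "e > 0"
  then have e2: "e / 2 > 0" by simp
  obtain d where d: "d > 0" and dd: "\<And>K z z'. K > 0 \<Longrightarrow> cmod z \<le> R \<Longrightarrow> cmod z' \<le> R \<Longrightarrow> cmod (z' - z) < d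
      \<Longrightarrow> norm (EE x K z' - EE x K z) \<le> e / 2"
    using E_equicont[OF e2] by metis
  obtain n :: nat where n: "2 * pi * R / d < real n" using reals_Archimedean2 by blast
  have small: "2 * pi * R / 2^k < d" if "k \<ge> n" for k
  proof -
    have "real n < 2^n" using less_exp[of n] by (metis of_nat_less_iff of_nat_numeral of_nat_power)
    also have "(2::real)^n \<le> 2^k" using that by (simp add: power_increasing)
    finally have nk: "real n < 2^k" .
    have np: "real n > 0" proof -
      have "0 < 2 * pi * R / d" using Rpos d pi_gt_zero by simp
      then show ?thesis using n by linarith
    qed
    have "2 * pi * R / 2^k < 2 * pi * R / (2 * pi * R / d)"
      proof (rule divide_strict_left_mono)
      show "2 * pi * R / d < 2^k" using n nk by linarith
      show "0 < 2 * pi * R" using Rpos pi_gt_zero by simp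
      show "0 < 2^k * (2 * pi * R / d)" using Rpos pi_gt_zero d by simp
    qed
    also have "\<dots> = d" using Rpos pi_gt_zero d by (simp add: field_simps)
    finally show ?thesis .
  qed
  have step: "norm (EE x (2^k') z - EE x (2^k) z) \<le> e / 2" if kk: "n \<le> k" "k \<le> k'" for k k'
  proof -
    define m where "m = (2::nat)^(k' - k)"
    define N where "N = m * 2^k"
    have m: "m > 0" unfolding m_def by simp
    have K: "(2::nat)^k > 0" by simp
    have N: "N = 2^k'" unfolding N_def m_def using kk by (simp add: power_add[symmetric])
    have Npos: "N > 0" using N by simp
    have "EE x (2^k') z - EE x (2^k) z
        = scaleC (1 / of_nat m) (\<Sum>l<m. EE x (2^k) (rt N ^ l * z)) - scaleC (1 / of_nat m) (\<Sum>l<m. EE x (2^k) z)"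
      unfolding N[symmetric] N_def E_mult[OF z K m] avg_const[OF m] ..
    also have "\<dots> = scaleC (1 / of_nat m) (\<Sum>l<m. EE x (2^k) (rt N ^ l * z) - EE x (2^k) z)"
      by (rule avg_diff)
    also have "norm \<dots> \<le> e / 2"
    proof (rule avg_bound[OF m])
      fix l assume l: "l < m"
      have "rt N ^ l * z - z = (rt N ^ l - 1) * z" by (simp add: left_diff_distrib)
      then have "cmod (rt N ^ l * z - z) = cmod (rt N ^ l - 1) * cmod z" by (simp only: norm_mult)
      also have "\<dots> \<le> (2 * pi * l / N) * R"
        using norm_rt_pow_minus_1[OF Npos, of l] z by (intro mult_mono) auto
      also have "\<dots> < (2 * pi * m / N) * R"
        using l Rpos Npos pi_gt_zero by (intro mult_strict_right_mono divide_strict_right_mono) auto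
      also have "\<dots> = 2 * pi * R / 2^k" unfolding N_def using m by (simp add: field_simps)
      also have "\<dots> < d" using small kk by simp
      finally have "cmod (rt N ^ l * z - z) < d" .
      then show "norm (EE x (2^k) (rt N ^ l * z) - EE x (2^k) z) \<le> e / 2"
        using z by (intro dd[OF K]) (auto simp: norm_mult)
    qed
    finally show ?thesis .
  qed
  show "\<exists>M. \<forall>a\<ge>M. \<forall>b\<ge>M. norm (EE x (2^a) z - EE x (2^b) z) < e"
  proof (intro exI allI impI)
    fix a b assume a: "a \<ge> n" and b: "b \<ge> n"
    show "norm (EE x (2^a) z - EE x (2^b) z) < e"
    proof (cases "b \<le> a")
      case True then show ?thesis using step[OF b True] e by simp
    next
      case False then show ?thesis using step[OF a, of b] e by (simp add: norm_minus_commute)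
    qed
  qed
qed

end

definition AA :: "'a::cstar_algebra \<Rightarrow> complex \<Rightarrow> 'a" where
  "AA x z = lim (\<lambda>k. EE x (2^k) z)"

context
  fixes x :: "'a::cstar_algebra" and R :: real
  assumes Rpos: "R > 0"
    and invd: "\<And>l. cmod l \<le> R \<Longrightarrow> invertible_el (1 - scaleC l x)"
begin

lemma A_lim: "cmod z \<le> R \<Longrightarrow> (\<lambda>k. EE x (2^k) z) \<longlonglongrightarrow> AA x z"
  unfolding AA_def using E_cauchy[OF Rpos invd] by (simp add: Cauchy_convergent_iff convergent_LIMSEQ_iff)

lemma A_equicont:
  assumes e: "e > 0"
  obtains d where "d > 0" "\<And>z z'. cmod z \<le> R \<Longrightarrow> cmod z' \<le> R \<Longrightarrow> cmod (z' - z) < d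
      \<Longrightarrow> norm (AA x z' - AA x z) \<le> e"
proof -
  obtain d where d: "d > 0" and dd: "\<And>K z z'. K > 0 \<Longrightarrow> cmod z \<le> R \<Longrightarrow> cmod z' \<le> R \<Longrightarrow> cmod (z' - z) < d
      \<Longrightarrow> norm (EE x K z' - EE x K z) \<le> e"
    using E_equicont[OF Rpos invd e] by metis
  show ?thesis
  proof (rule that[OF d])
    fix z z' assume z: "cmod z \<le> R" and z': "cmod z' \<le> R" and zz: "cmod (z' - z) < d"
    have "(\<lambda>k. norm (EE x (2^k) z' - EE x (2^k) z)) \<longlonglongrightarrow> norm (AA x z' - AA x z)"
      by (intro tendsto_norm tendsto_diff A_lim z z')
    then show "norm (AA x z' - AA x z) \<le> e"
      by (rule LIMSEQ_le_const2) (use dd[OF _ z z' zz] in auto)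
  qed
qed

lemma A_idem:
  assumes z: "cmod z \<le> R"
  shows "AA x z * AA x z = AA x z"
proof -
  define a where "a k = EE x (2^k) z" for k
  define b where "b k = EE x (2^k) (rt (2 * 2^k) * z)" for k
  have ab: "a (Suc k) = b k * a k" for k
    unfolding a_def b_def using E_double[OF Rpos invd z, of "2^k"] by simp
  have la: "a \<longlonglongrightarrow> AA x z" unfolding a_def by (rule A_lim[OF z])
  have d0: "(\<lambda>k. b k - a k) \<longlonglongrightarrow> 0"
  proof (rule LIMSEQ_I)
    fix r :: real assume r: "r > 0"
    then have r2: "r / 2 > 0" by simp
    obtain d where d: "d > 0" and dd: "\<And>K z z'. K > 0 \<Longrightarrow> cmod z \<le> R \<Longrightarrow> cmod z' \<le> R \<Longrightarrow> cmod (z' - z) < d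
        \<Longrightarrow> norm (EE x K z' - EE x K z) \<le> r / 2"
      using E_equicont[OF Rpos invd r2] by metis
    obtain n :: nat where n: "2 * pi * R / d < real n" using reals_Archimedean2 by blast
    have np: "real n > 0" proof -
      have "0 < 2 * pi * R / d" using Rpos d pi_gt_zero by simp
      then show ?thesis using n by linarith
    qed
    show "\<exists>no. \<forall>k\<ge>no. norm (b k - a k - 0) < r"
    proof (intro exI allI impI)
      fix k assume k: "k \<ge> n"
      have "real n < 2^n" using less_exp[of n] by (metis of_nat_less_iff of_nat_numeral of_nat_power)
      also have "(2::real)^n \<le> 2^k" using k by (simp add: power_increasing)
      finally have nk: "real n < 2^k" .
      have N: "(2::nat) * 2^k > 0" by simp
      have "rt (2 * 2^k) * z - z = (rt (2 * 2^k) ^ 1 - 1) * z" by (simp add: left_diff_distrib)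
      then have "cmod (rt (2 * 2^k) * z - z) = cmod (rt (2 * 2^k) ^ 1 - 1) * cmod z" by (simp only: norm_mult)
      also have "\<dots> \<le> (2 * pi * 1 / (2 * 2^k)) * R"
        using norm_rt_pow_minus_1[OF N, of 1] z by (intro mult_mono) auto
      also have "\<dots> \<le> 2 * pi * R / 2^k" using Rpos pi_gt_zero by (simp add: field_simps)
      also have "\<dots> < 2 * pi * R / (2 * pi * R / d)"
        proof (rule divide_strict_left_mono)
      show "2 * pi * R / d < 2^k" using n nk by linarith
      show "0 < 2 * pi * R" using Rpos pi_gt_zero by simp
      show "0 < 2^k * (2 * pi * R / d)" using Rpos pi_gt_zero d by simp
    qed
      also have "\<dots> = d" using Rpos pi_gt_zero d by (simp add: field_simps)
      finally have "cmod (rt (2 * 2^k) * z - z) < d" .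
      then have "norm (b k - a k) \<le> r / 2" unfolding a_def b_def
        using z by (intro dd) (auto simp: norm_mult)
      then show "norm (b k - a k - 0) < r" using r by simp
    qed
  qed
  have lb: "b \<longlonglongrightarrow> AA x z"
  proof -
    have "(\<lambda>k. a k + (b k - a k)) \<longlonglongrightarrow> AA x z + 0" by (intro tendsto_add la d0)
    then show ?thesis by simp
  qed
  have "(\<lambda>k. b k * a k) \<longlonglongrightarrow> AA x z * AA x z" by (intro tendsto_mult lb la)
  then have "(\<lambda>k. a (Suc k)) \<longlonglongrightarrow> AA x z * AA x z" unfolding ab .
  moreover have "(\<lambda>k. a (Suc k)) \<longlonglongrightarrow> AA x z" using LIMSEQ_Suc[OF la] .
  ultimately show ?thesis by (rule LIMSEQ_unique)
qed

lemma A_zero: "AA x 0 = 1"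
proof -
  have "EE x (2^k) 0 = 1" for k unfolding EE_def by (simp add: power_0_left)
  then show ?thesis unfolding AA_def by simp
qed

lemma A_R: "AA x (complex_of_real R) = 1"
proof (rule ccontr)
  assume ne: "AA x (complex_of_real R) \<noteq> 1"
  define \<phi> where "\<phi> r = norm (AA x (complex_of_real r) - 1)" for r
  have cont: "continuous_on {0..R} \<phi>"
    unfolding continuous_on_iff
  proof (intro ballI allI impI)
    fix r e :: real assume r: "r \<in> {0..R}" and e: "e > 0"
    then have e2: "e / 2 > 0" by simp
    obtain d where d: "d > 0" and dd: "\<And>z z'. cmod z \<le> R \<Longrightarrow> cmod z' \<le> R \<Longrightarrow> cmod (z' - z) < d
      \<Longrightarrow> norm (AA x z' - AA x z) \<le> e / 2"
      using A_equicont[OF e2] by metis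
    show "\<exists>d>0. \<forall>r'\<in>{0..R}. dist r' r < d \<longrightarrow> dist (\<phi> r') (\<phi> r) < e"
    proof (intro exI conjI ballI impI)
      fix r' assume r': "r' \<in> {0..R}" and rr: "dist r' r < d"
      have c1: "cmod (complex_of_real r) \<le> R" using r by simp
      have c2: "cmod (complex_of_real r') \<le> R" using r' by simp
      have "cmod (complex_of_real r' - complex_of_real r) = cmod (complex_of_real (r' - r))"
        by (simp only: of_real_diff)
      also have "\<dots> = dist r' r" by (simp only: norm_of_real dist_real_def)
      finally have c3: "cmod (complex_of_real r' - complex_of_real r) < d" using rr by simp
      have "norm (AA x (complex_of_real r') - AA x (complex_of_real r)) \<le> e / 2"
        by (rule dd[OF c1 c2 c3])
      moreover have "\<bar>\<phi> r' - \<phi> r\<bar> \<le> norm (AA x (complex_of_real r') - AA x (complex_of_real r))"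
        unfolding \<phi>_def using norm_triangle_ineq3[of "AA x (complex_of_real r') - 1" "AA x (complex_of_real r) - 1"]
        by simp
      ultimately show "dist (\<phi> r') (\<phi> r) < e" using e by (simp add: dist_real_def)
    qed (rule d)
  qed
  have p0: "\<phi> 0 = 0" unfolding \<phi>_def using A_zero by simp
  have near: "\<phi> r = 0" if "r \<in> {0..R}" "\<phi> r < 1" for r
  proof -
    have "cmod (complex_of_real r) \<le> R" using that by simp
    then have A: "AA x (complex_of_real r) * AA x (complex_of_real r) = AA x (complex_of_real r)"
      by (rule A_idem)
    have "norm (AA x (complex_of_real r) - 1) < 1" using that(2) unfolding \<phi>_def .
    then have "AA x (complex_of_real r) = 1" by (rule idem_near_one[OF A])
    then show ?thesis unfolding \<phi>_def by simp
  qed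
  have pR: "\<phi> R \<ge> 1"
  proof (rule ccontr)
    assume "\<not> \<phi> R \<ge> 1"
    then have "\<phi> R = 0" using near Rpos by simp
    then show False using ne unfolding \<phi>_def by simp
  qed
  have "\<exists>r. 0 \<le> r \<and> r \<le> R \<and> \<phi> r = 1/2"
    by (rule IVT'[OF _ _ _ cont]) (use p0 pR Rpos in auto)
  then obtain r where r: "0 \<le> r" "r \<le> R" "\<phi> r = 1/2" by blast
  then show False using near[of r] by simp
qed

lemma gelfand_core: "\<exists>k. R^(2^k) * norm (x^(2^k)) < 1"
proof -
  define u where "u k = 1 - scaleC ((complex_of_real R)^(2^k)) (x^(2^k))" for k :: nat
  have Rc: "cmod (complex_of_real R) \<le> R" using Rpos by simp
  have iu: "invertible_el (u k)" for k
  proof -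
    have k: "(2::nat)^k > 0" by simp
    show ?thesis unfolding u_def using E_avg(1)[OF Rpos invd Rc k] .
  qed
  have "(\<lambda>k. EE x (2^k) (complex_of_real R)) \<longlonglongrightarrow> 1" using A_lim[OF Rc] A_R by simp
  then have "(\<lambda>k. inv_el (EE x (2^k) (complex_of_real R))) \<longlonglongrightarrow> inv_el 1"
    by (rule tendsto_inv_el) simp
  then have "u \<longlonglongrightarrow> 1" unfolding EE_def u_def[symmetric] using inv_el_inv_el[OF iu] by simp
  then have "(\<lambda>k. 1 - u k) \<longlonglongrightarrow> 1 - 1" by (intro tendsto_diff tendsto_const)
  then have "(\<lambda>k. 1 - u k) \<longlonglongrightarrow> 0" by simp
  then have "(\<lambda>k. norm (1 - u k)) \<longlonglongrightarrow> 0" by (rule tendsto_norm_zero)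
  from LIMSEQ_D[OF this, of 1] obtain no where "\<forall>n\<ge>no. norm (norm (1 - u n) - 0) < 1" by auto
  then have "norm (1 - u no) < 1" by auto
  then obtain k where "norm (1 - u k) < 1" by blast
  moreover have "norm (1 - u k) = R^(2^k) * norm (x^(2^k))"
    unfolding u_def using Rpos by (simp add: norm_scaleC norm_power)
  ultimately show ?thesis by auto
qed

end

lemma norm_pow2_sa:
  fixes h :: "'a::cstar_algebra"
  assumes "adj h = h"
  shows "norm (h^(2^k)) = norm h ^ (2^k)"
proof (induction k)
  case (Suc k)
  have s: "adj (h^(2^k)) = h^(2^k)" using assms by simp
  have e2: "(2::nat)^Suc k = 2^k * 2" by simp
  then have "h^(2^Suc k) = (h^(2^k))^2" by (simp only: power_mult)
  also have "\<dots> = adj (h^(2^k)) * h^(2^k)" using s by (simp only: power2_eq_square)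
  finally have "h^(2^Suc k) = adj (h^(2^k)) * h^(2^k)" .
  then have "norm (h^(2^Suc k)) = norm (h^(2^k))^2" by (simp only: cstar_identity)
  also have "\<dots> = (norm h ^ (2^k))^2" by (simp only: Suc)
  also have "\<dots> = norm h ^ (2^Suc k)" by (simp only: e2 power_mult)
  finally show ?case .
qed simp

lemma gelfand_sa:
  fixes h :: "'a::cstar_algebra"
  assumes h: "adj h = h" and R: "R > 0"
    and invd: "\<And>l. cmod l \<le> R \<Longrightarrow> invertible_el (1 - scaleC l h)"
  shows "R * norm h < 1"
proof -
  have "\<exists>k. R^(2^k) * norm (h^(2^k)) < 1" by (rule gelfand_core[OF R invd])
  then obtain k where k: "R^(2^k) * norm (h^(2^k)) < 1" ..
  have "(R * norm h)^(2^k) = R^(2^k) * norm (h^(2^k))"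
    by (simp only: power_mult_distrib norm_pow2_sa[OF h])
  with k have "(R * norm h)^(2^k) < 1^(2^k)" by simp
  then show ?thesis by (rule power_less_imp_less_base) simp
qed

lemma gelfand_real:
  fixes h :: "'a::cstar_algebra"
  assumes h: "adj h = h" and c: "c > 0"
    and inv: "\<And>t. \<bar>t\<bar> > c \<Longrightarrow> invertible_el (of_real t - h)"
  shows "norm h \<le> c"
proof (rule ccontr)
  assume "\<not> norm h \<le> c"
  then have nh: "norm h > c" by simp
  define R where "R = 1 / norm h"
  have hp: "norm h > 0" using nh c by linarith
  then have R: "R > 0" unfolding R_def by simp
  have "R * norm h < 1"
  proof (rule gelfand_sa[OF h R])
    fix l assume l: "cmod l \<le> R"
    show "invertible_el (1 - scaleC l h)"
    proof (cases "l = 0")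
      case True then show ?thesis by simp
    next
      case l0: False
      show ?thesis
      proof (cases "Im l = 0")
        case False
        have "Im (1 / l) \<noteq> 0" using False l0 by (simp add: Im_divide)
        then have i: "invertible_el (scaleC (1 / l) 1 - h)" by (rule spec_real[OF h])
        have "scaleC l (scaleC (1 / l) 1 - h) = 1 - scaleC l h"
          using l0 by (simp add: scaleC_diff_right scaleC_scaleC)
        then show ?thesis using invertible_scaleC[OF i l0] by simp
      next
        case True
        define t where "t = Re l"
        have lt: "l = complex_of_real t" unfolding t_def using True by (simp add: complex_eq_iff)
        have t0: "t \<noteq> 0" using l0 lt by simp
        have "\<bar>t\<bar> \<le> R" using l lt by simp
        then have "\<bar>1 / t\<bar> \<ge> 1 / R" using t0 R by (simp add: abs_div_pos frac_le)
        then have "\<bar>1 / t\<bar> > c" unfolding R_def using nh by simp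
        then have i: "invertible_el (of_real (1 / t) - h)" by (rule inv)
        have sc: "scaleC l h = scaleR t h" unfolding lt by (rule scaleC_of_real)
        have "t * (1 / t) = 1" using t0 by simp
        then have o: "scaleR t (of_real (1 / t) :: 'a) = 1"
          by (metis of_real_1 of_real_mult scaleR_conv_of_real)
        have "scaleR t (of_real (1 / t) - h) = 1 - scaleC l h"
          unfolding sc scaleR_diff_right o ..
        then show ?thesis using i t0 invertible_scaleR_iff by metis
      qed
    qed
  qed
  then show False unfolding R_def using hp by simp
qed



definition bc :: "nat \<Rightarrow> real" where
  "bc n = ((1/2::real) gchoose n) * (-1)^n"

lemma bc_poch: "bc n = pochhammer (-1/2) n / fact n"
proof -
  have "bc n = ((-1)^n * (-1)^n) * pochhammer (-(1/2)) n / fact n"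
    unfolding bc_def gbinomial_pochhammer by (simp add: field_simps)
  also have "(-1::real)^n * (-1)^n = 1" by (induction n) auto
  finally show ?thesis by simp
qed

lemma bc_0[simp]: "bc 0 = 1"
  unfolding bc_def by simp

lemma bc_Suc_nonpos: "bc (Suc n) \<le> 0"
proof -
  have "pochhammer (-1/2::real) (Suc n) = (-1/2) * pochhammer (1/2) n"
    by (simp add: pochhammer_rec)
  moreover have "pochhammer (1/2::real) n \<ge> 0" by (rule pochhammer_nonneg) simp
  ultimately have "pochhammer (-1/2::real) (Suc n) \<le> 0" by simp
  then show ?thesis unfolding bc_poch by (simp add: divide_nonpos_pos)
qed

lemma bc_partial: "(\<Sum>k\<le>N. bc k) = pochhammer (1/2) N / fact N"
proof -
  have "(\<Sum>k\<le>N. bc k) = (-1)^N * ((1/2 - 1::real) gchoose N)"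
    unfolding bc_def by (rule gbinomial_sum_lower_neg)
  also have "(1/2 - 1::real) = - (1/2)" by simp
  also have "(-1)^N * (- (1/2::real) gchoose N) = ((-1)^N * (-1)^N) * pochhammer (1/2) N / fact N"
    unfolding gbinomial_pochhammer by (simp add: field_simps)
  also have "(-1::real)^N * (-1)^N = 1" by (induction N) auto
  finally show ?thesis by simp
qed

lemma bc_partial_nonneg: "(\<Sum>k\<le>N. bc k) \<ge> 0"
  unfolding bc_partial by (intro divide_nonneg_pos pochhammer_nonneg) simp_all

lemma abs_bc_partial: "(\<Sum>k\<le>N. \<bar>bc k\<bar>) = 2 - (\<Sum>k\<le>N. bc k)"
proof (induction N)
  case (Suc N)
  have "\<bar>bc (Suc N)\<bar> = - bc (Suc N)" using bc_Suc_nonpos[of N] by simp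
  then show ?case using Suc by simp
qed simp

lemma abs_bc_partial_le: "(\<Sum>k<n. \<bar>bc k\<bar>) \<le> 2"
proof -
  have "(\<Sum>k<n. \<bar>bc k\<bar>) \<le> (\<Sum>k\<le>n. \<bar>bc k\<bar>)"
    by (intro sum_mono2) auto
  also have "\<dots> \<le> 2" unfolding abs_bc_partial using bc_partial_nonneg[of n] by simp
  finally show ?thesis .
qed

lemma summable_abs_bc: "summable (\<lambda>n. \<bar>bc n\<bar>)"
  by (rule summableI_nonneg_bounded[OF _ abs_bc_partial_le]) simp

lemma suminf_abs_bc: "(\<Sum>n. \<bar>bc n\<bar>) \<le> 2"
  by (rule suminf_le_const[OF summable_abs_bc abs_bc_partial_le])

lemma summable_abs_bc_Suc: "summable (\<lambda>n. \<bar>bc (Suc n)\<bar>)"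
  using summable_abs_bc by (rule summable_Suc_iff[THEN iffD2])

lemma suminf_abs_bc_Suc: "(\<Sum>n. \<bar>bc (Suc n)\<bar>) \<le> 1"
proof -
  have "(\<Sum>n. \<bar>bc (Suc n)\<bar>) = (\<Sum>n. \<bar>bc n\<bar>) - \<bar>bc 0\<bar>"
    by (rule suminf_split_head[OF summable_abs_bc])
  then show ?thesis using suminf_abs_bc by simp
qed

lemma bc_conv: "(\<Sum>i\<le>k. bc i * bc (k - i)) = (if k = 0 then 1 else if k = 1 then -1 else 0)"
proof -
  have "(\<Sum>i\<le>k. bc i * bc (k - i)) = (\<Sum>i\<le>k. (-1)^k * (((1/2::real) gchoose i) * ((1/2) gchoose (k - i))))"
  proof (intro sum.cong refl)
    fix i assume "i \<in> {..k}"
    then have "k = i + (k - i)" by simp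
    then have eq: "(-1::real)^i * (-1)^(k - i) = (-1)^k" by (metis power_add)
    then show "bc i * bc (k - i) = (-1)^k * (((1/2::real) gchoose i) * ((1/2) gchoose (k - i)))"
    proof -
      have "bc i * bc (k - i) = (((1/2::real) gchoose i) * ((1/2) gchoose (k - i))) * ((-1)^i * (-1)^(k - i))"
        unfolding bc_def by (simp only: mult_ac)
      also have "\<dots> = (((1/2::real) gchoose i) * ((1/2) gchoose (k - i))) * (-1)^k" by (simp only: eq)
      finally show ?thesis by (simp only: mult.commute)
    qed
  qed
  also have "\<dots> = (-1)^k * (\<Sum>i=0..k. ((1/2::real) gchoose i) * ((1/2) gchoose (k - i)))"
    by (simp add: sum_distrib_left atLeast0AtMost)
  also have "\<dots> = (-1)^k * ((1/2 + 1/2::real) gchoose k)" by (simp only: gbinomial_Vandermonde)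
  also have "(1/2 + 1/2::real) = of_nat 1" by simp
  also have "(of_nat 1 gchoose k) = (of_nat (1 choose k) :: real)" by (simp only: binomial_gbinomial)
  finally have e: "(\<Sum>i\<le>k. bc i * bc (k - i)) = (-1)^k * of_nat (1 choose k)" .
  show ?thesis
  proof (cases "k \<le> 1")
    case True then show ?thesis using e by (cases k) auto
  next
    case False then show ?thesis using e by simp
  qed
qed

lemma norm_bc_term:
  fixes u :: "'a::cstar_algebra"
  assumes "norm u \<le> 1"
  shows "norm (scaleR (bc n) (u^n)) \<le> \<bar>bc n\<bar>"
proof -
  have "norm (u^n) \<le> 1" using norm_power_ineq[of u n] power_le_one[OF _ assms, of n] by simp
  then show ?thesis by (simp add: mult_left_le)
qed

lemma sqrt_series:
  fixes u :: "'a::cstar_algebra"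
  assumes u: "norm u \<le> 1"
  shows "summable (\<lambda>n. norm (scaleR (bc n) (u^n)))"
    "(\<Sum>n. scaleR (bc n) (u^n)) * (\<Sum>n. scaleR (bc n) (u^n)) = 1 - u"
proof -
  show sn: "summable (\<lambda>n. norm (scaleR (bc n) (u^n)))"
    by (rule summable_comparison_test[OF _ summable_abs_bc]) (use norm_bc_term[OF u] in auto)
  have "(\<Sum>n. scaleR (bc n) (u^n)) * (\<Sum>n. scaleR (bc n) (u^n))
      = (\<Sum>k. \<Sum>i\<le>k. scaleR (bc i) (u^i) * scaleR (bc (k - i)) (u^(k - i)))"
    by (rule Cauchy_product[OF sn sn])
  also have "\<dots> = (\<Sum>k. scaleR (\<Sum>i\<le>k. bc i * bc (k - i)) (u^k))"
  proof (intro suminf_cong)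
    fix k
    have "(\<Sum>i\<le>k. scaleR (bc i) (u^i) * scaleR (bc (k - i)) (u^(k - i)))
        = (\<Sum>i\<le>k. scaleR (bc i * bc (k - i)) (u^k))"
    proof (intro sum.cong refl)
      fix i assume "i \<in> {..k}"
      then have "u^i * u^(k - i) = u^k" by (simp add: power_add[symmetric])
      then show "scaleR (bc i) (u^i) * scaleR (bc (k - i)) (u^(k - i)) = scaleR (bc i * bc (k - i)) (u^k)"
        by simp
    qed
    also have "\<dots> = scaleR (\<Sum>i\<le>k. bc i * bc (k - i)) (u^k)" by (simp add: scaleR_sum_left)
    finally show "(\<Sum>i\<le>k. scaleR (bc i) (u^i) * scaleR (bc (k - i)) (u^(k - i)))
        = scaleR (\<Sum>i\<le>k. bc i * bc (k - i)) (u^k)" .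
  qed
  also have "\<dots> = (\<Sum>k\<in>{0,1}. scaleR (\<Sum>i\<le>k. bc i * bc (k - i)) (u^k))"
  proof (rule suminf_finite)
    fix n :: nat assume "n \<notin> {0, 1}"
    then have "(\<Sum>i\<le>n. bc i * bc (n - i)) = 0" by (simp only: bc_conv) simp
    then show "scaleR (\<Sum>i\<le>n. bc i * bc (n - i)) (u^n) = 0" by simp
  qed simp
  also have "\<dots> = 1 - u" by (simp add: bc_conv)
  finally show "(\<Sum>n. scaleR (bc n) (u^n)) * (\<Sum>n. scaleR (bc n) (u^n)) = 1 - u" .
qed



definition sp :: "'a::cstar_algebra \<Rightarrow> bool" where
  "sp a \<longleftrightarrow> adj a = a \<and> (\<forall>t::real. t < 0 \<longrightarrow> invertible_el (of_real t - a))"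

lemma sp_adj: "sp a \<Longrightarrow> adj a = a"
  unfolding sp_def by blast

lemma sp_inv: "sp a \<Longrightarrow> t < 0 \<Longrightarrow> invertible_el (of_real t - a)"
  unfolding sp_def by blast

lemma of_real_alg_mult_commute: "(of_real t :: 'a::cstar_algebra) * y = y * of_real t"
  by (simp add: of_real_def)

lemma sp_norm:
  fixes a :: "'a::cstar_algebra"
  assumes a: "sp a" and t: "norm a \<le> t"
  shows "norm (of_real t - a) \<le> t"
proof (cases "t = 0")
  case True
  then have "a = 0" using t by simp
  then show ?thesis using True by simp
next
  case False
  then have tp: "t > 0" using t norm_ge_zero[of a] by linarith
  show ?thesis
  proof (rule gelfand_real)
    show "adj (of_real t - a) = of_real t - a" using sp_adj[OF a] by simp
    fix \<mu> :: real assume mu: "\<bar>\<mu>\<bar> > t"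
    have e: "of_real \<mu> - (of_real t - a) = - (of_real (t - \<mu>) - a)" by (simp add: algebra_simps)
    show "invertible_el (of_real \<mu> - (of_real t - a))"
    proof (cases "\<mu> > 0")
      case True
      then have "t - \<mu> < 0" using mu by simp
      then show ?thesis unfolding e by (intro invertible_minus sp_inv[OF a])
    next
      case False
      then have "norm a < \<bar>t - \<mu>\<bar>" using mu t tp by simp
      then show ?thesis unfolding e by (intro invertible_minus spec_bound_real)
    qed
  qed (rule tp)
qed

lemma sp_normI:
  fixes a :: "'a::cstar_algebra"
  assumes a: "adj a = a" and t: "norm (of_real t - a) \<le> t"
  shows "sp a"
  unfolding sp_def
proof (intro conjI allI impI a)
  fix s :: real assume s: "s < 0"
  have "norm (a - of_real t) < \<bar>s - t\<bar>" using t s by (simp add: norm_minus_commute)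
  then have "invertible_el (of_real (s - t) - (a - of_real t))" by (rule spec_bound_real)
  then show "invertible_el (of_real s - a)" by (simp add: algebra_simps)
qed

lemma sp_add: "sp a \<Longrightarrow> sp b \<Longrightarrow> sp (a + b)"
proof -
  assume a: "sp a" and b: "sp b"
  have "norm (of_real (norm a + norm b) - (a + b)) \<le> norm (of_real (norm a) - a) + norm (of_real (norm b) - b)"
    by (metis (no_types, lifting) add_diff_add norm_triangle_ineq of_real_add)
  also have "\<dots> \<le> norm a + norm b" using sp_norm[OF a order_refl] sp_norm[OF b order_refl] by simp
  finally have n: "norm (of_real (norm a + norm b) - (a + b)) \<le> norm a + norm b" .
  show ?thesis by (rule sp_normI[OF _ n]) (simp add: sp_adj[OF a] sp_adj[OF b])
qed

lemma sp_scaleR: "sp a \<Longrightarrow> c \<ge> 0 \<Longrightarrow> sp (scaleR c a)"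
proof -
  assume a: "sp a" and c: "c \<ge> 0"
  have "of_real (c * norm a) - scaleR c a = scaleR c (of_real (norm a) - a)"
    by (simp add: scaleR_diff_right of_real_def)
  then have "norm (of_real (c * norm a) - scaleR c a) = c * norm (of_real (norm a) - a)"
    using c by simp
  also have "\<dots> \<le> c * norm a" using sp_norm[OF a order_refl] c by (simp add: mult_left_mono)
  finally have n: "norm (of_real (c * norm a) - scaleR c a) \<le> c * norm a" .
  show ?thesis by (rule sp_normI[OF _ n]) (simp add: sp_adj[OF a])
qed

lemma sp_one: "sp (1::'a::cstar_algebra)"
  by (rule sp_normI[where t=1]) simp_all

lemma sp_zero: "sp (0::'a::cstar_algebra)"
  by (rule sp_normI[where t=0]) simp_all

lemma sp_sq:
  fixes h :: "'a::cstar_algebra"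
  assumes h: "adj h = h"
  shows "sp (h * h)"
  unfolding sp_def
proof (intro conjI allI impI)
  show "adj (h * h) = h * h" using h by simp
  fix s :: real assume s: "s < 0"
  define c where "c = sqrt (- s)"
  have c: "c > 0" unfolding c_def using s by simp
  have cc: "c * c = - s" unfolding c_def using s by simp
  define \<alpha> :: 'a where "\<alpha> = scaleC (\<i> * complex_of_real c) 1"
  have i1: "invertible_el (\<alpha> - h)" unfolding \<alpha>_def by (rule spec_real[OF h]) (use c in simp)
  have i2: "invertible_el (- \<alpha> - h)" unfolding \<alpha>_def scaleC_minus_left[symmetric]
    by (rule spec_real[OF h]) (use c in simp)
  have ah: "\<alpha> * h = h * \<alpha>" unfolding \<alpha>_def by (simp add: scaleC_mult_left scaleC_mult_right)
  have "\<alpha> * \<alpha> = scaleC ((\<i> * complex_of_real c) * (\<i> * complex_of_real c)) 1" unfolding \<alpha>_def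
    by (simp add: scaleC_mult_left scaleC_mult_right scaleC_scaleC)
  also have "(\<i> * complex_of_real c) * (\<i> * complex_of_real c) = complex_of_real s"
    using cc by (simp add: algebra_simps flip: of_real_mult)
  also have "scaleC (complex_of_real s) (1::'a) = of_real s" by (rule scaleC_real_one)
  finally have aa: "\<alpha> * \<alpha> = of_real s" .
  have "(\<alpha> - h) * (- \<alpha> - h) = - (\<alpha> * \<alpha>) - (\<alpha> * h - h * \<alpha>) + h * h" by (simp add: algebra_simps)
  also have "\<dots> = - (of_real s - h * h)" using ah aa by simp
  finally have "(\<alpha> - h) * (- \<alpha> - h) = - (of_real s - h * h)" .
  then have "invertible_el (- (of_real s - h * h))" using invertible_mult(1)[OF i1 i2] by simp
  then show "invertible_el (of_real s - h * h)" by (simp only: invertible_minus_iff)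
qed

lemma bounded_linear_adj: "bounded_linear (adj :: 'a::cstar_algebra \<Rightarrow> 'a)"
  by (rule bounded_linear_intro[where K=1]) simp_all

lemma sp_sqrt:
  fixes a :: "'a::cstar_algebra"
  assumes a: "sp a"
  shows "\<exists>r. sp r \<and> r * r = a \<and> (\<forall>y. y * a = a * y \<longrightarrow> y * r = r * y)"
proof -
  define t where "t = norm a + 1"
  have tp: "t > 0" unfolding t_def using norm_ge_zero[of a] by linarith
  define u where "u = scaleR (1/t) (of_real t - a)"
  have nu: "norm u \<le> 1"
  proof -
    have "norm u = (1/t) * norm (of_real t - a)" unfolding u_def using tp by simp
    also have "\<dots> \<le> (1/t) * t" using sp_norm[OF a, of t] tp unfolding t_def
      by (intro mult_left_mono) simp_all
    finally show ?thesis using tp by simp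
  qed
  have au: "adj u = u" unfolding u_def using sp_adj[OF a] by simp
  define f where "f n = scaleR (bc n) (u^n)" for n
  note ss = sqrt_series[OF nu]
  have sf: "summable f" unfolding f_def by (rule summable_norm_cancel[OF ss(1)])
  define s0 where "s0 = (\<Sum>n. f n)"
  have s00: "s0 * s0 = 1 - u" unfolding s0_def f_def by (rule ss(2))
  define r where "r = scaleR (sqrt t) s0"
  have "r * r = scaleR (sqrt t * sqrt t) (s0 * s0)" unfolding r_def by simp
  also have "\<dots> = scaleR t (1 - u)" using tp s00 by simp
  also have "\<dots> = a" unfolding u_def using tp by (simp add: scaleR_diff_right of_real_def)
  finally have rr: "r * r = a" .
  have "adj s0 = (\<Sum>n. adj (f n))" unfolding s0_def by (rule bounded_linear.suminf[OF bounded_linear_adj sf])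
  also have "\<dots> = s0" unfolding s0_def f_def using au by simp
  finally have as0: "adj s0 = s0" .
  have ar: "adj r = r" unfolding r_def using as0 by simp
  have f0: "f 0 = 1" unfolding f_def by simp
  have sfs: "summable (\<lambda>n. norm (f (Suc n)))" using ss(1) unfolding f_def by (rule summable_Suc_iff[THEN iffD2])
  have "(\<Sum>n. f (Suc n)) = s0 - 1" unfolding s0_def using suminf_split_head[OF sf] f0 by simp
  then have "norm (1 - s0) = norm (\<Sum>n. f (Suc n))" by (simp add: norm_minus_commute)
  also have "\<dots> \<le> (\<Sum>n. norm (f (Suc n)))" by (rule summable_norm[OF sfs])
  also have "\<dots> \<le> (\<Sum>n. \<bar>bc (Suc n)\<bar>)"
    by (rule suminf_le[OF _ sfs summable_abs_bc_Suc]) (unfold f_def, rule norm_bc_term[OF nu])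
  also have "\<dots> \<le> 1" by (rule suminf_abs_bc_Suc)
  finally have n1: "norm (1 - s0) \<le> 1" .
  have "of_real (sqrt t) - r = scaleR (sqrt t) (1 - s0)" unfolding r_def
    by (simp add: scaleR_diff_right of_real_def)
  then have "norm (of_real (sqrt t) - r) = sqrt t * norm (1 - s0)" using tp by simp
  also have "\<dots> \<le> sqrt t * 1" using n1 tp by (intro mult_left_mono) simp_all
  finally have spr: "sp r" using ar by (intro sp_normI) simp_all
  have comm: "y * r = r * y" if ya: "y * a = a * y" for y
  proof -
    have yu: "y * u = u * y" unfolding u_def using ya
      by (simp add: algebra_simps of_real_alg_mult_commute)
    have yf: "y * f n = f n * y" for n unfolding f_def
      using power_commuting_commutes[OF yu[symmetric], of n] by simp
    have "y * s0 = (\<Sum>n. y * f n)" unfolding s0_def by (rule suminf_mult[OF sf, symmetric])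
    also have "\<dots> = (\<Sum>n. f n * y)" using yf by simp
    also have "\<dots> = s0 * y" unfolding s0_def by (rule suminf_mult2[OF sf, symmetric])
    finally show ?thesis unfolding r_def by simp
  qed
  show ?thesis using spr rr comm by blast
qed



lemma sa_zero_spec:
  fixes p :: "'a::cstar_algebra"
  assumes p: "adj p = p" and inv: "\<And>t. t \<noteq> 0 \<Longrightarrow> invertible_el (of_real t - p)"
  shows "p = 0"
proof (rule ccontr)
  assume "p \<noteq> 0"
  then have c: "norm p / 2 > 0" by simp
  have "norm p \<le> norm p / 2"
    by (rule gelfand_real[OF p c]) (rule inv, use c in auto)
  then show False using c by simp
qed

lemma sp_neg_zero:
  fixes p :: "'a::cstar_algebra"
  assumes a: "sp p" and b: "sp (- p)"
  shows "p = 0"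
proof (rule sa_zero_spec)
  show "adj p = p" using sp_adj[OF a] .
  fix t :: real assume t: "t \<noteq> 0"
  show "invertible_el (of_real t - p)"
  proof (cases "t < 0")
    case True then show ?thesis by (rule sp_inv[OF a])
  next
    case False
    then have "- t < 0" using t by simp
    then have "invertible_el (of_real (- t) - (- p))" by (rule sp_inv[OF b])
    then have "invertible_el (- (of_real t - p))" by simp
    then show ?thesis by (simp only: invertible_minus_iff)
  qed
qed

lemma jacobson:
  fixes a b :: "'a::cstar_algebra"
  assumes i: "invertible_el (1 - a * b)"
  shows "invertible_el (1 - b * a)"
proof -
  define w where "w = inv_el (1 - a * b)"
  have w1: "(1 - a * b) * w = 1" unfolding w_def by (rule inv_el_right[OF i])
  have w2: "w * (1 - a * b) = 1" unfolding w_def by (rule inv_el_left[OF i])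
  have e1: "w - a * b * w = 1" using w1 by (simp add: algebra_simps)
  have e2: "w - w * a * b = 1" using w2 by (simp add: algebra_simps)
  have "(1 - b * a) * (1 + b * w * a) = 1 - b * a + b * (w - a * b * w) * a"
    by (simp add: algebra_simps mult.assoc)
  also have "\<dots> = 1" unfolding e1 by simp
  finally have l: "(1 - b * a) * (1 + b * w * a) = 1" .
  have "(1 + b * w * a) * (1 - b * a) = 1 - b * a + b * (w - w * a * b) * a"
    by (simp add: algebra_simps mult.assoc)
  also have "\<dots> = 1" unfolding e2 by simp
  finally have r: "(1 + b * w * a) * (1 - b * a) = 1" .
  show ?thesis using l r by (rule invertible_elI)
qed

lemma jacobson_real:
  fixes a b :: "'a::cstar_algebra"
  assumes t: "t \<noteq> 0" and i: "invertible_el (of_real t - a * b)"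
  shows "invertible_el (of_real t - b * a)"
proof -
  have e: "of_real t - x * y = scaleR t (1 - scaleR (1/t) x * y)" for x y :: 'a
    using t by (simp add: scaleR_diff_right of_real_def)
  have "invertible_el (1 - scaleR (1/t) a * b)" using i unfolding e invertible_scaleR_iff[OF t] .
  then have "invertible_el (1 - b * scaleR (1/t) a)" by (rule jacobson)
  then have "invertible_el (1 - scaleR (1/t) b * a)" by simp
  then show ?thesis unfolding e invertible_scaleR_iff[OF t] .
qed

lemma half1: "scaleR (1/2) y + scaleR (1/2) y = (y::'a::cstar_algebra)"
  by (simp add: scaleR_add_left[symmetric])

lemma half2: "scaleR (1/2) y + (scaleR (1/2) y + z) = y + (z::'a::cstar_algebra)"
  by (simp add: add.assoc[symmetric] scaleR_add_left[symmetric])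

lemma sp_neg_adj:
  fixes x :: "'a::cstar_algebra"
  assumes n: "sp (- (adj x * x))"
  shows "x = 0"
proof -
  define h where "h = scaleR (1/2) (x + adj x)"
  define k where "k = scaleC (- \<i> / 2) (x - adj x)"
  have ah: "adj h = h" unfolding h_def by (simp add: add.commute)
  have ak: "adj k = k" unfolding k_def
    by (simp add: adj_scaleC) (metis minus_diff_eq scaleC_minus_left scaleC_minus_right)
  have hh: "h * h = scaleR (1/4) ((x + adj x) * (x + adj x))" unfolding h_def by simp
  have "k * k = scaleC ((- \<i> / 2) * (- \<i> / 2)) ((x - adj x) * (x - adj x))" unfolding k_def
    by (simp add: scaleC_mult_left scaleC_mult_right scaleC_scaleC)
  also have "(- \<i> / 2) * (- \<i> / 2) = complex_of_real (- 1/4)" by (simp add: complex_eq_iff)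
  finally have kk: "k * k = scaleR (- 1/4) ((x - adj x) * (x - adj x))" by (simp only: scaleC_of_real)
  have sum: "adj x * x + x * adj x = scaleR 2 (h * h + k * k)"
    unfolding hh kk by (simp add: algebra_simps scaleR_diff_right half2 half1)
  have eq: "x * adj x = scaleR 2 (h * h + k * k) + (- (adj x * x))" using sum by (simp add: algebra_simps)
  have "sp (scaleR 2 (h * h + k * k))"
    by (intro sp_scaleR sp_add sp_sq ah ak) simp
  then have "sp (scaleR 2 (h * h + k * k) + (- (adj x * x)))" using n by (rule sp_add)
  then have sxx: "sp (x * adj x)" unfolding eq .
  have "adj x * x = 0"
  proof (rule sa_zero_spec)
    show "adj (adj x * x) = adj x * x" by simp
    fix t :: real assume t: "t \<noteq> 0"
    show "invertible_el (of_real t - adj x * x)"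
    proof (cases "t < 0")
      case True
      then have "invertible_el (of_real t - x * adj x)" by (rule sp_inv[OF sxx])
      then show ?thesis by (rule jacobson_real[OF t])
    next
      case False
      then have "- t < 0" using t by simp
      then have "invertible_el (of_real (- t) - (- (adj x * x)))" by (rule sp_inv[OF n])
      then have "invertible_el (- (of_real t - adj x * x))" by simp
      then show ?thesis by (simp only: invertible_minus_iff)
    qed
  qed
  then have "norm x ^ 2 = 0" by (simp only: cstar_identity[symmetric] norm_zero)
  then show ?thesis by simp
qed

lemma sa_cube_zero:
  fixes w :: "'a::cstar_algebra"
  assumes w: "adj w = w" and c: "w * w * w = 0"
  shows "w = 0"
proof -
  have "w ^ (2^2) = w * (w * w * w)" by (simp add: numeral_eq_Suc mult.assoc)
  then have "norm w ^ (2^2) = 0" using norm_pow2_sa[OF w, of 2] c by simp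
  then show ?thesis by simp
qed

theorem kadison_vowden:
  fixes x :: "'a::cstar_algebra"
  shows "sp (adj x * x)"
proof -
  define a where "a = adj x * x"
  have aa: "adj a = a" unfolding a_def by simp
  obtain r where spr: "sp r" and rr: "r * r = a * a" and rc: "\<And>y. y * (a * a) = (a * a) * y \<Longrightarrow> y * r = r * y"
    using sp_sqrt[OF sp_sq[OF aa]] by blast
  have ar: "a * r = r * a" by (rule rc) (simp add: mult.assoc)
  have adr: "adj r = r" by (rule sp_adj[OF spr])
  define u where "u = r + a"
  define v where "v = r - a"
  have "u * v = (r * r - a * a) + (a * r - r * a)" unfolding u_def v_def by (simp add: algebra_simps)
  then have uv: "u * v = 0" by (simp add: rr ar)
  have "v * u = (r * r - a * a) + (r * a - a * r)" unfolding u_def v_def by (simp add: algebra_simps)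
  then have vu: "v * u = 0" by (simp add: rr ar)
  have av: "adj v = v" unfolding v_def using adr aa by simp
  have spv: "sp v"
    unfolding sp_def
  proof (intro conjI allI impI av)
    fix t :: real assume t: "t < 0"
    have s2: "sp (scaleR 2 r)" by (rule sp_scaleR[OF spr]) simp
    have i1: "invertible_el (of_real t - scaleR 2 r)" by (rule sp_inv[OF s2 t])
    have "of_real t = scaleC (complex_of_real t) (1::'a)" by (simp only: scaleC_real_one)
    have "complex_of_real t \<noteq> 0" using t by simp
    then have "invertible_el (scaleC (complex_of_real t) (1::'a))" by (rule invertible_scaleC[OF invertible_one])
    then have i0: "invertible_el (of_real t :: 'a)" by (simp only: scaleC_real_one)
    have c1: "u * of_real t = of_real t * u" by (rule of_real_alg_mult_commute[symmetric])
    have c2: "v * of_real t = of_real t * v" by (rule of_real_alg_mult_commute[symmetric])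
    have uv2: "u + v = scaleR 2 r" unfolding u_def v_def by (simp add: scaleR_2)
    have "(of_real t - u) * (of_real t - v) = of_real t * (of_real t - (u + v)) + u * v"
      by (simp add: algebra_simps c1)
    also have "\<dots> = of_real t * (of_real t - scaleR 2 r)" by (simp only: uv uv2 add_0_right)
    finally have "(of_real t - u) * (of_real t - v) = of_real t * (of_real t - scaleR 2 r)" .
    then have ip: "invertible_el ((of_real t - u) * (of_real t - v))"
      using invertible_mult(1)[OF i0 i1] by simp
    have "(of_real t - v) * (of_real t - u) = of_real t * (of_real t - (u + v)) + v * u"
      by (simp add: algebra_simps c2)
    also have "\<dots> = of_real t * (of_real t - (u + v)) + u * v" by (simp only: uv vu)
    also have "\<dots> = (of_real t - u) * (of_real t - v)"
      by (simp add: algebra_simps c1)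
    finally have cm: "(of_real t - u) * (of_real t - v) = (of_real t - v) * (of_real t - u)" by simp
    show "invertible_el (of_real t - v)" by (rule invertible_commuting_factors(2)[OF ip cm])
  qed
  define w where "w = scaleR (1/2) v"
  have spw: "sp w" unfolding w_def by (rule sp_scaleR[OF spv]) simp
  have aw: "adj w = w" by (rule sp_adj[OF spw])
  have "v * v + scaleR 2 (a * v) = (r * r - a * a) + (a * r - r * a)" unfolding v_def
    by (simp add: algebra_simps scaleR_2)
  then have "v * v + scaleR 2 (a * v) = 0" by (simp add: rr ar)
  then have a2: "scaleR 2 (a * v) = - (v * v)" by (simp add: add_eq_0_iff)
  have "a * v = scaleR (1/2) (scaleR 2 (a * v))" by simp
  also have "\<dots> = scaleR (1/2) (- (v * v))" by (simp only: a2)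
  finally have avv: "a * v = scaleR (1/2) (- (v * v))" .
  have "a * w = - (w * w)" unfolding w_def using avv by simp
  then have waw: "w * a * w = - (w * w * w)" by (simp add: mult.assoc)
  obtain q where spq: "sp q" and qq: "q * q = w" and qc: "\<And>y. y * w = w * y \<Longrightarrow> y * q = q * y"
    using sp_sqrt[OF spw] by blast
  have qw: "w * q = q * w" by (rule qc) simp
  have aq: "adj q = q" by (rule sp_adj[OF spq])
  have "(q * w) * (q * w) = q * ((w * q) * w)" by (simp only: mult.assoc)
  also have "\<dots> = q * ((q * w) * w)" by (simp only: qw)
  also have "\<dots> = (q * q) * (w * w)" by (simp only: mult.assoc)
  also have "\<dots> = w * w * w" by (simp only: qq mult.assoc)
  finally have e3: "(q * w) * (q * w) = w * w * w" .
  have "adj (q * w) = q * w" using aq aw qw by simp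
  then have "sp ((q * w) * (q * w))" by (rule sp_sq)
  then have s3: "sp (w * w * w)" unfolding e3 .
  have e4: "- (adj (x * w) * (x * w)) = w * w * w"
    using waw aw unfolding a_def by (simp add: mult.assoc)
  have "sp (- (adj (x * w) * (x * w)))" unfolding e4 by (rule s3)
  then have "x * w = 0" by (rule sp_neg_adj)
  then have "w * w * w = 0" using waw unfolding a_def by (simp add: mult.assoc)
  then have "w = 0" by (rule sa_cube_zero[OF aw])
  then have "v = 0" unfolding w_def by simp
  then have "r = a" unfolding v_def by simp
  then show ?thesis using spr unfolding a_def by simp
qed

lemma positive_iff_sp: "positive a \<longleftrightarrow> sp (a::'a::cstar_algebra)"
proof
  assume "positive a"
  then obtain b where "a = adj b * b" unfolding positive_def by blast
  then show "sp a" using kadison_vowden by simp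
next
  assume a: "sp a"
  obtain r where "sp r" "r * r = a" using sp_sqrt[OF a] by blast
  then have "a = adj r * r" by (simp add: sp_adj)
  then show "positive a" unfolding positive_def by blast
qed

lemma sp_conj:
  fixes r d :: "'a::cstar_algebra"
  assumes r: "sp r" and d: "adj d = d"
  shows "sp (d * r * d)"
proof -
  obtain q where q: "sp q" "q * q = r" using sp_sqrt[OF r] by blast
  have "adj (q * d) * (q * d) = d * (q * q) * d" using d sp_adj[OF q(1)] by (simp add: mult.assoc)
  then have e: "d * r * d = adj (q * d) * (q * d)" using q(2) by simp
  show ?thesis unfolding e by (rule kadison_vowden)
qed

lemma sp_sqrt_unique_aux:
  fixes r r0 :: "'a::cstar_algebra"
  assumes r: "sp r" and r0: "sp r0" and e: "r * r = r0 * r0" and c: "r * r0 = r0 * r"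
  shows "r = r0"
proof -
  define d where "d = r - r0"
  have ad: "adj d = d" unfolding d_def using sp_adj[OF r] sp_adj[OF r0] by simp
  have "d * (r + r0) = 0" unfolding d_def using e c by (simp add: algebra_simps)
  then have "d * (r + r0) * d = 0" by simp
  then have "d * r * d + d * r0 * d = 0" by (simp only: distrib_left distrib_right)
  then have neg: "d * r * d = - (d * r0 * d)" by (simp add: eq_neg_iff_add_eq_0)
  have s1: "sp (d * r * d)" by (rule sp_conj[OF r ad])
  have s2: "sp (d * r0 * d)" by (rule sp_conj[OF r0 ad])
  have z: "d * r0 * d = 0" using sp_neg_zero[OF s2] s1 neg by simp
  then have z1: "d * r * d = 0" using neg by simp
  have "d * d * d = d * (r - r0) * d" by (simp only: d_def[symmetric])
  also have "\<dots> = d * r * d - d * r0 * d" by (simp only: left_diff_distrib right_diff_distrib)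
  finally have "d * d * d = d * r * d - d * r0 * d" .
  then have "d * d * d = 0" using z z1 by simp
  then have "d = 0" by (rule sa_cube_zero[OF ad])
  then show ?thesis unfolding d_def by simp
qed

lemma sp_sqrt_unique:
  fixes r r' :: "'a::cstar_algebra"
  assumes r: "sp r" and r': "sp r'" and e: "r * r = r' * r'"
  shows "r = r'"
proof -
  define a where "a = r * r"
  have sa: "sp a" unfolding a_def using sp_sq[OF sp_adj[OF r]] .
  obtain r0 where sr0: "sp r0" and rr0: "r0 * r0 = a" and c0: "\<And>y. y * a = a * y \<Longrightarrow> y * r0 = r0 * y"
    using sp_sqrt[OF sa] by blast
  have "r * r0 = r0 * r" by (rule c0) (simp add: a_def mult.assoc)
  then have 1: "r = r0" using sp_sqrt_unique_aux[OF r sr0] rr0 unfolding a_def by simp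
  have "r' * r0 = r0 * r'" by (rule c0) (simp add: a_def e mult.assoc)
  then have 2: "r' = r0" using sp_sqrt_unique_aux[OF r' sr0] rr0 e unfolding a_def by simp
  show ?thesis using 1 2 by simp
qed

lemma psqrt_eq:
  fixes r a :: "'a::cstar_algebra"
  assumes r: "sp r" and ra: "r * r = a"
  shows "psqrt a = r"
  unfolding psqrt_def
proof (rule the_equality)
  show "positive r \<and> r * r = a" using r ra positive_iff_sp by blast
  fix r' assume "positive r' \<and> r' * r' = a"
  then have "sp r'" "r' * r' = r * r" using ra positive_iff_sp by auto
  then show "r' = r" using sp_sqrt_unique[OF _ r] by blast
qed



lemma mp_inv_eq:
  fixes T X :: "'a::cstar_algebra"
  assumes 1: "T * X * T = T" and 2: "X * T * X = X" and 3: "adj (T * X) = T * X" and 4: "adj (X * T) = X * T"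
  shows "mp_inv T = X"
  unfolding mp_inv_def
proof (rule the_equality)
  show "T * X * T = T \<and> X * T * X = X \<and> adj (T * X) = T * X \<and> adj (X * T) = X * T" using assms by blast
  fix Y assume "T * Y * T = T \<and> Y * T * Y = Y \<and> adj (T * Y) = T * Y \<and> adj (Y * T) = Y * T"
  then have y1: "T * Y * T = T" and y2: "Y * T * Y = Y" and y3: "adj (T * Y) = T * Y" and y4: "adj (Y * T) = Y * T"
    by auto
  have a: "X * T = Y * T"
  proof -
    have "X * T = adj (X * T)" using 4 by simp
    also have "\<dots> = adj T * adj X" by simp
    also have "\<dots> = adj (T * Y * T) * adj X" using y1 by simp
    also have "\<dots> = adj (Y * T) * adj (X * T)" by (simp add: mult.assoc)
    also have "\<dots> = Y * T * (X * T)" using y4 4 by simp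
    also have "\<dots> = Y * T" using 1 by (simp add: mult.assoc)
    finally show ?thesis .
  qed
  have b: "T * X = T * Y"
  proof -
    have "T * X = adj (T * X)" using 3 by simp
    also have "\<dots> = adj X * adj T" by simp
    also have "\<dots> = adj X * adj (T * Y * T)" using y1 by simp
    also have "\<dots> = adj (T * X) * adj (T * Y)" by (simp add: mult.assoc)
    also have "\<dots> = T * X * (T * Y)" using y3 3 by simp
    also have "\<dots> = T * Y" using 1 by (simp add: mult.assoc[symmetric])
    finally show ?thesis .
  qed
  have "Y = Y * T * Y" using y2 by simp
  also have "\<dots> = X * T * Y" using a by simp
  also have "\<dots> = X * (T * X)" using b by (simp add: mult.assoc)
  also have "\<dots> = X" using 2 by (simp add: mult.assoc)
  finally show "Y = X" .
qed

lemma range_proj_eq: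
  fixes Q P :: "'a::cstar_algebra"
  assumes "adj P = P" "P * P = P" "P * Q = Q" "Q * P = P"
  shows "range_proj Q = P"
  unfolding range_proj_def
proof (rule the_equality)
  show "adj P = P \<and> P * P = P \<and> P * Q = Q \<and> Q * P = P" using assms by blast
  fix P' assume "adj P' = P' \<and> P' * P' = P' \<and> P' * Q = Q \<and> Q * P' = P'"
  then have a: "adj P' = P'" and c: "P' * Q = Q" and d: "Q * P' = P'" by auto
  have "P * P' = P * Q * P'" using d by (simp add: mult.assoc)
  also have "\<dots> = P'" using assms(3) d by simp
  finally have e1: "P * P' = P'" .
  have "P' * P = P' * Q * P" using assms(4) by (simp add: mult.assoc)
  also have "\<dots> = P" using c assms(4) by simp
  finally have e2: "P' * P = P" .
  have "P' = adj (P * P')" using e1 a by simp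
  also have "\<dots> = P' * P" using a assms(1) by simp
  also have "\<dots> = P" by (rule e2)
  finally show "P' = P" .
qed

lemma adj_inv_el:
  fixes h :: "'a::cstar_algebra"
  assumes i: "invertible_el h" and h: "adj h = h"
  shows "adj (inv_el h) = inv_el h"
proof -
  have "h * adj (inv_el h) = 1" using inv_el_left[OF i] h by (metis adj_mult adj_one)
  moreover have "adj (inv_el h) * h = 1" using inv_el_right[OF i] h by (metis adj_mult adj_one)
  ultimately show ?thesis using inv_el_eq by metis
qed

lemma sp_invertible_one_plus:
  fixes a :: "'a::cstar_algebra"
  assumes "sp a"
  shows "invertible_el (1 + a)"
proof -
  have "invertible_el (of_real (-1) - a)" by (rule sp_inv[OF assms]) simp
  then have "invertible_el (- (1 + a))" by simp
  then show ?thesis by (simp only: invertible_minus_iff)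
qed

lemma range_proj_exists:
  fixes Q :: "'a::cstar_algebra"
  assumes Q: "Q * Q = Q"
  shows "adj (range_proj Q) = range_proj Q \<and> range_proj Q * range_proj Q = range_proj Q
    \<and> range_proj Q * Q = Q \<and> Q * range_proj Q = range_proj Q"
proof -
  define y where "y = Q - adj Q"
  define h where "h = Q + adj Q - 1"
  have Qa: "adj Q * adj Q = adj Q" using Q by (metis adj_mult)
  have ah: "adj h = h" unfolding h_def by (simp add: add.commute)
  have "h * h = 1 + adj y * y" unfolding h_def y_def using Q Qa by (simp add: algebra_simps)
  then have "invertible_el (h * h)" using sp_invertible_one_plus[OF kadison_vowden[of y]] by simp
  then have ih: "invertible_el h" using invertible_commuting_factors by blast
  define hi where "hi = inv_el h"
  have hi1: "h * hi = 1" and hi2: "hi * h = 1" unfolding hi_def using inv_el_props[OF ih] by auto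
  have ahi: "adj hi = hi" unfolding hi_def by (rule adj_inv_el[OF ih ah])
  have hQ: "h * Q = adj Q * h" unfolding h_def using Q Qa by (simp add: algebra_simps)
  have Qh: "Q * h = h * adj Q" unfolding h_def using Q Qa by (simp add: algebra_simps)
  have QQa: "Q * adj Q = Q * h" unfolding h_def using Q by (simp add: algebra_simps)
  have c1: "Q * hi = hi * adj Q"
  proof -
    have "Q * hi = hi * (h * Q) * hi" using hi1 hi2 by (simp add: mult.assoc[symmetric])
    also have "\<dots> = hi * (adj Q * h) * hi" using hQ by simp
    also have "\<dots> = hi * adj Q" using hi1 by (simp add: mult.assoc)
    finally show ?thesis .
  qed
  have c2: "hi * Q = adj Q * hi"
  proof -
    have "hi * Q = hi * (Q * h) * hi" using hi1 by (simp add: mult.assoc)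
    also have "\<dots> = hi * (h * adj Q) * hi" using Qh by simp
    also have "\<dots> = adj Q * hi" using hi2 by (simp add: mult.assoc[symmetric])
    finally show ?thesis .
  qed
  define P where "P = Q * hi"
  have aP: "adj P = P" unfolding P_def using ahi c1 by simp
  have PQ: "P * Q = Q"
  proof -
    have "P * Q = Q * (hi * Q)" unfolding P_def by (simp add: mult.assoc)
    also have "\<dots> = Q * adj Q * hi" using c2 by (simp add: mult.assoc)
    also have "\<dots> = Q * (h * hi)" using QQa by (simp add: mult.assoc)
    also have "\<dots> = Q" using hi1 by simp
    finally show ?thesis .
  qed
  have QP: "Q * P = P" unfolding P_def using Q by (simp add: mult.assoc[symmetric])
  have PP: "P * P = P"
  proof -
    have "P * P = (P * Q) * hi" unfolding P_def by (simp add: mult.assoc)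
    also have "\<dots> = P" using PQ unfolding P_def by simp
    finally show ?thesis .
  qed
  have "range_proj Q = P" by (rule range_proj_eq[OF aP PP PQ QP])
  then show ?thesis using aP PP PQ QP by simp
qed



lemma lift: "a * b = c \<Longrightarrow> a * (b * z) = c * (z::'a::cstar_algebra)"
  by (simp add: mult.assoc[symmetric])

lemma matched_formula:
  fixes Q :: "'a::cstar_algebra"
  assumes Q: "Q * Q = Q"
  defines "P \<equiv> range_proj Q"
  defines "T \<equiv> Q - P"
  defines "S \<equiv> T + adj T"
  defines "F \<equiv> psqrt (1 + S * S)"
  shows "sp F \<and> invertible_el F \<and> F * F = 1 + S * S \<and> F * P = P * F \<and> F * S = S * F \<and>
    matched_proj Q = scaleR (1/2) (1 + inv_el F * (2 * P - 1 + S))"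
proof -
  have rp: "adj P = P" "P * P = P" "P * Q = Q" "Q * P = P"
    using range_proj_exists[OF Q] unfolding P_def by auto
  define Td where "Td = adj T"
  have PT: "P * T = T" unfolding T_def using rp by (simp add: algebra_simps)
  have TP: "T * P = 0" unfolding T_def using rp by (simp add: algebra_simps)
  have TT: "T * T = 0" unfolding T_def using rp Q by (simp add: algebra_simps)
  have TdP: "Td * P = Td" unfolding Td_def using arg_cong[OF PT, of adj] rp by simp
  have PTd: "P * Td = 0" unfolding Td_def using arg_cong[OF TP, of adj] rp by simp
  have TdTd: "Td * Td = 0" unfolding Td_def using arg_cong[OF TT, of adj] by simp
  have Sdef: "S = T + Td" unfolding S_def Td_def ..
  have aS: "adj S = S" unfolding Sdef Td_def by (simp add: add.commute)
  have PS: "P * S = T" unfolding Sdef using PT PTd by (simp add: distrib_left)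
  have SP: "S * P = Td" unfolding Sdef using TP TdP by (simp add: distrib_right)
  have SS: "S * S = T * Td + Td * T" unfolding Sdef using TT TdTd by (simp add: algebra_simps)
  have PSS: "P * (S * S) = T * Td" unfolding SS using PT PTd by (simp add: algebra_simps lift[OF PT] lift[OF PTd])
  have SSP: "(S * S) * P = T * Td" unfolding SS using TP TdP by (simp add: algebra_simps mult.assoc)
  have spA: "sp (1 + S * S)" by (intro sp_add sp_one sp_sq aS)
  obtain r where spr: "sp r" and rr: "r * r = 1 + S * S"
      and rc: "\<And>y. y * (1 + S * S) = (1 + S * S) * y \<Longrightarrow> y * r = r * y"
    using sp_sqrt[OF spA] by blast
  have Fr: "F = r" unfolding F_def by (rule psqrt_eq[OF spr rr])
  have spF: "sp F" using spr Fr by simp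
  have FF: "F * F = 1 + S * S" using rr Fr by simp
  have FP: "F * P = P * F"
  proof -
    have "P * (1 + S * S) = (1 + S * S) * P" using PSS SSP by (simp add: algebra_simps)
    then show ?thesis using rc Fr by simp
  qed
  have FS: "F * S = S * F"
  proof -
    have "S * (1 + S * S) = (1 + S * S) * S" by (simp add: algebra_simps mult.assoc)
    then show ?thesis using rc Fr by simp
  qed
  have iFF: "invertible_el (F * F)" unfolding FF using sp_invertible_one_plus[OF sp_sq[OF aS]] .
  have iF: "invertible_el F" using invertible_commuting_factors(1)[OF iFF refl] .
  define G where "G = inv_el F"
  have FG: "F * G = 1" and GF: "G * F = 1" unfolding G_def using inv_el_props[OF iF] by auto
  have GP: "G * P = P * G" unfolding G_def using commute_inv_el[OF iF FP[symmetric]] by simp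
  have GS: "G * S = S * G" unfolding G_def using commute_inv_el[OF iF FS[symmetric]] by simp
  have Teq: "T = P * S" using PS by simp
  have Tdeq: "Td = S * P" using SP by simp
  have GT: "G * T = T * G" unfolding Teq using GP GS by (simp add: mult.assoc[symmetric]) (simp add: mult.assoc)
  have GTd: "G * Td = Td * G" unfolding Tdeq using GP GS by (simp add: mult.assoc[symmetric]) (simp add: mult.assoc)
  have FT: "F * T = T * F" unfolding Teq using FP FS by (simp add: mult.assoc[symmetric]) (simp add: mult.assoc)
  have FTd: "F * Td = Td * F" unfolding Tdeq using FP FS by (simp add: mult.assoc[symmetric]) (simp add: mult.assoc)
  have i1F: "invertible_el (1 + F)" by (rule sp_invertible_one_plus[OF spF])
  define K where "K = inv_el (1 + F)"
  have K1: "(1 + F) * K = 1" and K2: "K * (1 + F) = 1" unfolding K_def using inv_el_props[OF i1F] by auto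
  have KP: "K * P = P * K" unfolding K_def using commute_inv_el[OF i1F, of P] FP by (simp add: algebra_simps)
  have KT: "K * T = T * K" unfolding K_def using commute_inv_el[OF i1F, of T] FT by (simp add: algebra_simps)
  have KTd: "K * Td = Td * K" unfolding K_def using commute_inv_el[OF i1F, of Td] FTd by (simp add: algebra_simps)
  have KF: "K * F = 1 - K" using K2 by (simp add: algebra_simps)
  have FK: "F * K = 1 - K" using K1 by (simp add: algebra_simps)
  have GK: "G * K = G - K"
  proof -
    have "G = G * ((1 + F) * K)" using K1 by simp
    also have "\<dots> = G * K + (G * F) * K" by (simp add: algebra_simps)
    also have "\<dots> = G * K + K" using GF by simp
    finally show ?thesis by (simp add: eq_diff_eq)
  qed
  have KG: "K * G = G - K"
  proof -
    have "K * G = G * K" unfolding G_def K_def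
      using commute_inv_el[OF i1F, of "inv_el F"] commute_inv_el[OF iF, of "1 + F"]
      by (simp add: algebra_simps)
    then show ?thesis using GK by simp
  qed
  have FF2: "F * F = 1 + T * Td + Td * T" using FF SS by simp
  have TdT: "Td * T = (1 - P) * (F * F - 1)"
    unfolding FF2 using PT PTd by (simp add: algebra_simps lift[OF PT] lift[OF PTd])
  have key5: "Td * (T * K) = Td * (T * G) - 1 + P + G - P * G"
  proof -
    have "(F * F - 1) * (G * K) = F * K - G * K" using FG by (simp add: algebra_simps lift[OF FG])
    also have "\<dots> = 1 - G" using FK GK by simp
    finally have "(F * F - 1) * (G * K) = 1 - G" .
    then have "Td * T * (G * K) = (1 - P) * (1 - G)" unfolding TdT by (simp add: mult.assoc)
    then have "Td * (T * G) - Td * (T * K) = 1 - P - G + P * G" unfolding GK by (simp add: algebra_simps)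
    then show ?thesis by (simp add: algebra_simps)
  qed
  note L = lift[OF rp(2)] lift[OF PT] lift[OF TP] lift[OF TdP] lift[OF PTd] lift[OF TT] lift[OF TdTd]
    lift[OF GP] lift[OF GT] lift[OF GTd] lift[OF KP] lift[OF KT] lift[OF KTd] lift[OF FP] lift[OF FT]
    lift[OF FTd] lift[OF FG] lift[OF GF] lift[OF KF] lift[OF FK] lift[OF GK] lift[OF KG]
  have Qeq: "Q = P + T" unfolding T_def by simp
  have Qd: "adj Q = P + Td" unfolding Qeq Td_def using rp by simp
  have QQd: "Q * adj Q = P + T * Td" unfolding Qeq using rp PTd TP by (simp add: algebra_simps Td_def[symmetric])
  have PFP: "P * F * P = P * F" using FP rp by (simp add: mult.assoc L)
  have spPF: "sp (P * F)" using sp_conj[OF spF rp(1)] PFP by simp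
  have "(P * F) * (P * F) = P * (F * F)" using FP rp by (simp add: mult.assoc L)
  also have "\<dots> = Q * adj Q" unfolding QQd FF using PSS by (simp add: algebra_simps)
  finally have "psqrt (Q * adj Q) = P * F" using psqrt_eq[OF spPF] by simp
  then have absQ: "absv (adj Q) = P * F" unfolding absv_def by simp
  have PFPG: "(P * F) * (P * G) = P" using FP rp FG by (simp add: mult.assoc L)
  have PGPF: "(P * G) * (P * F) = P" using GP rp GF by (simp add: mult.assoc L)
  have mp: "mp_inv (P * F) = P * G"
  proof (rule mp_inv_eq)
    show "P * F * (P * G) * (P * F) = P * F" using PFPG rp by (simp add: L)
    show "P * G * (P * F) * (P * G) = P * G" using PGPF rp by (simp add: L)
    show "adj (P * F * (P * G)) = P * F * (P * G)" using PFPG rp by simp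
    show "adj (P * G * (P * F)) = P * G * (P * F)" using PGPF rp by simp
  qed
  have iv: "inv_el (P * F + 1) = P * K + (1 - P)"
  proof (rule inv_el_eq)
    show "(P * F + 1) * (P * K + (1 - P)) = 1"
      by (simp add: algebra_simps L FP KP rp FK)
    show "(P * K + (1 - P)) * (P * F + 1) = 1"
      by (simp add: algebra_simps L FP KP rp KF)
  qed
  have X: "(P * F + (P + Td)) * (P * G) * (P * K + (1 - P)) * (P * F + (P + T)) = 1 + G * (2 * P - 1 + S)"
    unfolding Sdef
    by (simp add: algebra_simps L rp(2) PT TP TdP PTd TT TdTd GP GT GTd KP KT KTd FP FT FTd FG GF KF FK GK KG key5 mult_2)
  have "matched_proj Q = scaleR (1/2) (1 + G * (2 * P - 1 + S))"
    unfolding matched_proj_def absQ mp iv Qd[symmetric] X[symmetric] Qeq[symmetric] by simp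
  then show ?thesis using spF iF FF FP FS unfolding G_def by blast
qed



lemma final_identity:
  fixes P T Td G F :: "'a::cstar_algebra"
  assumes PP: "P * P = P" and PT: "P * T = T" and TP: "T * P = 0" and TdP: "Td * P = Td" and PTd: "P * Td = 0"
    and TT: "T * T = 0" and TdTd: "Td * Td = 0"
    and GP: "G * P = P * G" and GT: "G * T = T * G" and GTd: "G * Td = Td * G"
    and FP: "F * P = P * F" and FT: "F * T = T * F" and FTd: "F * Td = Td * F"
    and FG: "F * G = 1" and GF: "G * F = 1" and FF: "F * F = 1 + T * Td + Td * T"
  defines "M \<equiv> G * ((P + P - 1) + (T + Td))"
  defines "N \<equiv> G * ((P + P - 1) - (T + Td))"
  shows "F * F * ((G + G + (1 + N)) * M + 1 + 1 - (1 + M)) = (P + T) + (P + T) + (P + T) + (P + T)"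
  unfolding M_def N_def
  by (simp add: algebra_simps lift[OF PP] lift[OF PT] lift[OF TP] lift[OF TdP] lift[OF PTd] lift[OF TT] lift[OF TdTd]
    lift[OF GP] lift[OF GT] lift[OF GTd] lift[OF FP] lift[OF FT] lift[OF FTd] lift[OF FG] lift[OF GF]
    PP PT TP TdP PTd TT TdTd GP GT GTd FP FT FTd FG GF)
    (simp add: algebra_simps lift[OF PP] lift[OF PT] lift[OF TP] lift[OF TdP] lift[OF PTd] lift[OF TT] lift[OF TdTd]
    PP PT TP TdP PTd TT TdTd FF)


lemma half1': "scaleR (1/2) (y + y) = (y::'a::cstar_algebra)"
  by (simp only: scaleR_add_right half1)

theorem theorem5p8:
  fixes Q :: "'a::cstar_algebra"
  assumes "idempotent Q"
  defines "C \<equiv> (1 - matched_proj Q - supp_proj Q) ^ 2"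
  shows "invertible_el C \<and>
    Q = scaleR (1/2) (inv_el C *
          ((psqrt C + supp_proj Q) * (2 * matched_proj Q - 1) + 1 - matched_proj Q))"
proof -
  have Q: "Q * Q = Q" using assms(1) unfolding idempotent_def .
  define P where "P = range_proj Q"
  define T where "T = Q - P"
  define S where "S = T + adj T"
  define F where "F = psqrt (1 + S * S)"
  have mf: "sp F \<and> invertible_el F \<and> F * F = 1 + S * S \<and> F * P = P * F \<and> F * S = S * F \<and>
    matched_proj Q = scaleR (1/2) (1 + inv_el F * (2 * P - 1 + S))"
    unfolding F_def S_def T_def P_def by (rule matched_formula[OF Q])
  then have spF: "sp F" and iF: "invertible_el F" and FF0: "F * F = 1 + S * S" and FP: "F * P = P * F"
    and FS: "F * S = S * F" and mQ: "matched_proj Q = scaleR (1/2) (1 + inv_el F * (2 * P - 1 + S))"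
    by auto
  have rp: "adj P = P" "P * P = P" "P * Q = Q" "Q * P = P"
    using range_proj_exists[OF Q] unfolding P_def by auto
  define Td where "Td = adj T"
  have PT: "P * T = T" unfolding T_def using rp by (simp add: algebra_simps)
  have TP: "T * P = 0" unfolding T_def using rp by (simp add: algebra_simps)
  have TT: "T * T = 0" unfolding T_def using rp Q by (simp add: algebra_simps)
  have TdP: "Td * P = Td" unfolding Td_def using arg_cong[OF PT, of adj] rp by simp
  have PTd: "P * Td = 0" unfolding Td_def using arg_cong[OF TP, of adj] rp by simp
  have TdTd: "Td * Td = 0" unfolding Td_def using arg_cong[OF TT, of adj] by simp
  have Sdef: "S = T + Td" unfolding S_def Td_def ..
  have PS: "P * S = T" unfolding Sdef using PT PTd by (simp add: distrib_left)
  have SP: "S * P = Td" unfolding Sdef using TP TdP by (simp add: distrib_right)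
  have SS: "S * S = T * Td + Td * T" unfolding Sdef using TT TdTd by (simp add: algebra_simps)
  define G where "G = inv_el F"
  have FG: "F * G = 1" and GF: "G * F = 1" unfolding G_def using inv_el_props[OF iF] by auto
  have GP: "G * P = P * G" unfolding G_def using commute_inv_el[OF iF FP[symmetric]] by simp
  have GS: "G * S = S * G" unfolding G_def using commute_inv_el[OF iF FS[symmetric]] by simp
  have Teq: "T = P * S" using PS by simp
  have Tdeq: "Td = S * P" using SP by simp
  have GT: "G * T = T * G" unfolding Teq using GP GS by (simp add: mult.assoc[symmetric]) (simp add: mult.assoc)
  have GTd: "G * Td = Td * G" unfolding Tdeq using GP GS by (simp add: mult.assoc[symmetric]) (simp add: mult.assoc)
  have FT: "F * T = T * F" unfolding Teq using FP FS by (simp add: mult.assoc[symmetric]) (simp add: mult.assoc)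
  have FTd: "F * Td = Td * F" unfolding Tdeq using FP FS by (simp add: mult.assoc[symmetric]) (simp add: mult.assoc)
  have FF: "F * F = 1 + T * Td + Td * T" using FF0 SS by simp
  have aF: "adj F = F" by (rule sp_adj[OF spF])
  have aG: "adj G = G" unfolding G_def by (rule adj_inv_el[OF iF aF])
  define Q' where "Q' = 2 * P - Q"
  have Q'Q': "Q' * Q' = Q'" unfolding Q'_def using rp Q by (simp add: algebra_simps mult_2)
  have rp': "range_proj Q' = P"
    by (rule range_proj_eq[OF rp(1) rp(2)]) (simp_all add: Q'_def algebra_simps rp mult_2)
  have T': "Q' - range_proj Q' = - T" by (subst rp') (simp add: Q'_def T_def mult_2)
  have S': "(Q' - P) + adj (Q' - P) = - S" using T' unfolding rp' S_def by simp
  have "matched_proj Q' = scaleR (1/2) (1 + inv_el (psqrt (1 + (- S) * (- S))) * (2 * P - 1 + - S))"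
    using matched_formula[OF Q'Q'] unfolding rp' S' by blast
  then have sQ: "supp_proj Q = scaleR (1/2) (1 + G * (2 * P - 1 - S))"
    unfolding supp_proj_def P_def[symmetric] Q'_def[symmetric] G_def F_def by simp
  define M where "M = G * ((P + P - 1) + (T + Td))"
  define N where "N = G * ((P + P - 1) - (T + Td))"
  have mM: "matched_proj Q = scaleR (1/2) (1 + M)"
    by (simp only: mQ M_def G_def[symmetric] Sdef mult_2)
  have sN: "supp_proj Q = scaleR (1/2) (1 + N)"
    by (simp only: sQ N_def Sdef mult_2)
  define J where "J = P + P - 1"
  have JJ: "J * J = 1" unfolding J_def using rp by (simp add: algebra_simps)
  have GJ: "G * J = J * G" unfolding J_def using GP by (simp add: algebra_simps)
  have MN: "M + N = G * J + G * J" unfolding M_def N_def J_def by (simp add: algebra_simps)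
  have "matched_proj Q + supp_proj Q = scaleR (1/2) ((1 + M) + (1 + N))"
    unfolding mM sN by (simp only: scaleR_add_right)
  also have "(1 + M) + (1 + N) = (1 + 1) + (M + N)" by (simp only: add_ac)
  also have "\<dots> = (1 + 1) + (G * J + G * J)" by (simp only: MN)
  also have "\<dots> = (1 + G * J) + (1 + G * J)" by (simp only: add_ac)
  also have "scaleR (1/2) ((1 + G * J) + (1 + G * J)) = 1 + G * J" by (rule half1')
  finally have ms: "matched_proj Q + supp_proj Q = 1 + G * J" .
  have "1 - matched_proj Q - supp_proj Q = 1 - (matched_proj Q + supp_proj Q)" by (simp add: algebra_simps)
  also have "\<dots> = - (G * J)" by (simp only: ms) simp
  finally have "1 - matched_proj Q - supp_proj Q = - (G * J)" .
  then have "C = (G * J) * (G * J)" unfolding C_def by (simp add: power2_eq_square)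
  also have "\<dots> = G * G * (J * J)" by (simp add: mult.assoc lift[OF GJ[symmetric]])
  finally have CGG: "C = G * G" using JJ by simp
  have c1: "C * (F * F) = 1" unfolding CGG using GF by (simp add: mult.assoc lift[OF GF])
  have c2: "(F * F) * C = 1" unfolding CGG using FG by (simp add: mult.assoc lift[OF FG])
  have iC: "invertible_el C" using c1 c2 by (rule invertible_elI)
  have invC: "inv_el C = F * F" using c1 c2 by (rule inv_el_eq)
  have "G * F * G = G" using GF by simp
  then have spG: "sp G" using sp_conj[OF spF aG] by simp
  have psC: "psqrt C = G" using psqrt_eq[OF spG] CGG by simp
  have m2: "2 * matched_proj Q - 1 = M" unfolding mM mult_2 half1 by simp
  have Gh: "G = scaleR (1/2) (G + G)" using half1[of G] by simp
  have e1: "(psqrt C + supp_proj Q) = scaleR (1/2) (G + G + (1 + N))"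
    unfolding psC sN by (subst Gh) (simp only: scaleR_right_distrib)
  have "scaleR (1/2) ((G + G + (1 + N)) * M + 1 + 1 - (1 + M))
      = scaleR (1/2) ((G + G + (1 + N)) * M) + (scaleR (1/2) 1 + scaleR (1/2) 1) - scaleR (1/2) (1 + M)"
    by (simp only: scaleR_right_diff_distrib scaleR_add_right add.assoc)
  also have "\<dots> = scaleR (1/2) ((G + G + (1 + N)) * M) + 1 - scaleR (1/2) (1 + M)"
    by (simp only: half1)
  finally have Xeq: "scaleR (1/2) ((G + G + (1 + N)) * M + 1 + 1 - (1 + M))
      = scaleR (1/2) ((G + G + (1 + N)) * M) + 1 - scaleR (1/2) (1 + M)" .
  have e2: "(psqrt C + supp_proj Q) * (2 * matched_proj Q - 1) + 1 - matched_proj Q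
      = scaleR (1/2) ((G + G + (1 + N)) * M + 1 + 1 - (1 + M))"
    unfolding e1 m2 unfolding mM Xeq by (simp only: mult_scaleR_left)
  have fi: "F * F * ((G + G + (1 + N)) * M + 1 + 1 - (1 + M)) = (P + T) + (P + T) + (P + T) + (P + T)"
    unfolding M_def N_def by (rule final_identity[OF rp(2) PT TP TdP PTd TT TdTd GP GT GTd FP FT FTd FG GF FF])
  have "scaleR (1/2) (inv_el C * ((psqrt C + supp_proj Q) * (2 * matched_proj Q - 1) + 1 - matched_proj Q))
      = scaleR (1/2) (scaleR (1/2) ((P + T) + (P + T) + (P + T) + (P + T)))"
    unfolding invC e2 fi[symmetric] by simp
  also have "(P + T) + (P + T) + (P + T) + (P + T) = ((P + T) + (P + T)) + ((P + T) + (P + T))"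
    by (simp only: add.assoc)
  also have "scaleR (1/2) (scaleR (1/2) (((P + T) + (P + T)) + ((P + T) + (P + T)))) = P + T"
    by (simp only: half1')
  also have "\<dots> = Q" unfolding T_def by simp
  finally show ?thesis using iC by simp
qed


end
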